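(* Assume $r_k\ge4/7$ for all $k\ge2$, $\kappa\ge\|f'\|_{C[-\beta,\beta]}$, $\|\phi^0\|_\infty\le\beta$, and $$\tau_1\le\min\Big\{\Big(\frac{4}{11\varsigma m(\kappa+4\varepsilon^2/h^2)\Gamma(2-\alpha)}\Big)^{1/\alpha},\Big(\frac{4}{11\kappa(1-\varsigma)m\Gamma(2-\alpha)}\Big)^{1/\alpha}\Big\}.$$ Then the (balanced) $L2$-$1_\sigma$-sESAV scheme is energy-stable without further time-step size restriction: $\mathcal E_h[\phi^n,R^n]\le\mathcal E_h[\phi^0,R^0]$ for all $n\ge1$.
   Context: Setting: $\Omega=(0,L)^2$ with periodic boundary conditions; constants $m>0$, $\varepsilon>0$, $\alpha\in(0,1)$, and $\varsigma:=\alpha/2$. The nonlinearity $f=-F'$ is one of: (double-well) $F(\phi)=\frac14(1-\phi^2)^2$, $f(\phi)=\phi-\phi^3$, with $\beta=1$; or (Flory–Huggins) $F(\phi)=\frac{\theta}{2}[(1+\phi)\ln(1+\phi)+(1-\phi)\ln(1-\phi)]-\frac{\theta_c}{2}\phi^2$, $f(\phi)=\frac{\theta}{2}\ln\frac{1-\phi}{1+\phi}+\theta_c\phi$ on $(-1,1)$, with $\theta_c>\theta>0$ and $\beta\in(0,1)$ the positive root of $f$. In both cases $f(\pm\beta)=0$. Spatial discretization: $M\in\mathbb N$, $h=L/M$; $\mathbb V_h$ is the space of real grid functions $v=\{v_{ij}\}_{i,j\in\mathbb Z}$ that are $M$-periodic in each index; $\langle v,w\rangle=h^2\sum_{i,j=1}^Mv_{ij}w_{ij}$,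 $\|v\|=\sqrt{\langle v,v\rangle}$, $\|v\|_\infty=\max_{1\le i,j\le M}|v_{ij}|$; $\Delta_hv_{ij}=h^{-2}(v_{i+1,j}+v_{i-1,j}+v_{i,j+1}+v_{i,j-1}-4v_{ij})$; $\nabla_hv_{ij}=\big(\frac{v_{i+1,j}-v_{ij}}h,\frac{v_{i,j+1}-v_{ij}}h\big)$ and $\|\nabla_hv\|^2=h^2\sum_{i,j=1}^M|\nabla_hv_{ij}|^2$. Scalar functions act on grid functions pointwise. $E_{1h}[v]=\langle F(v),1\rangle$ and $g_h(v,w)=\exp(w)/\exp(E_{1h}[v])$ for $v\in\mathbb V_h$ (with $\|v\|_\infty<1$ in the Flory–Huggins case) and $w\in\mathbb R$. The discrete modified energy is $\mathcal E_h[\phi,R]=\frac{\varepsilon^2}{2}\|\nabla_h\phi\|^2+R$. Auxiliary functional: $V:\mathbb R\to\mathbb R$ satisfies (A1) $V\in C^1(\mathbb R)\cap W^{2,\infty}(\mathbb R)$, $V(1)=1$, $V'(1)=0$, $|V'|\le K_1$; (A2) $0\le V\le K_2$ for a constant $K_2>0$; (A3) $|z_1-1|\le|z_2-1|$ implies $|V(z_1)-1|\le|V(z_2)-1|$. Time grid: $0=t_0<t_1<\dots<t_N=T$, $\tau_k=t_k-t_{k-1}$, $r_k=\tau_k/\tau_{k-1}$ ($k\ge2$), $\nabla_\tau v^k=v^k-v^{k-1}$, $\mathbb D_\tau v^k=\nabla_\tau v^k/\tau_k$, $\omega_\mu(t)=t^{\mu-1}/\Gamma(\mu)$. Constant $\kappa\ge0$;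 data $\phi^0\in\mathbb V_h$, $R^0\in\mathbb R$. For $n\ge2$ the predicted solution is $\hat\phi^n=\min\{\max\{(1+r_n)\phi^{n-1}-r_n\phi^{n-2},-\beta\},\beta\}$ (pointwise). $L2$-$1_\sigma$ discretization: $t_{k-\varsigma}=(1-\varsigma)t_k+\varsigma t_{k-1}$, $t_{k-1/2}=(t_k+t_{k-1})/2$; $a^{(n)}_{n-k}=\frac1{\tau_k}\int_{t_{k-1}}^{\min\{t_k,t_{n-\varsigma}\}}\omega_{1-\alpha}(t_{n-\varsigma}-s)\,ds$ ($1\le k\le n$), $b^{(n)}_{n-k}=\frac{2}{\tau_k(\tau_k+\tau_{k+1})}\int_{t_{k-1}}^{t_k}(s-t_{k-1/2})\omega_{1-\alpha}(t_{n-\varsigma}-s)\,ds$ ($1\le k\le n-1$); $B^{(1)}_0=a^{(1)}_0$, and for $n\ge2$: $B^{(n)}_0=a^{(n)}_0+b^{(n)}_1/r_n$, $B^{(n)}_{n-k}=a^{(n)}_{n-k}+b^{(n)}_{n-k+1}/r_k-b^{(n)}_{n-k}$ for $2\le k\le n-1$, $B^{(n)}_{n-1}=a^{(n)}_{n-1}-b^{(n)}_{n-1}$; $\tilde{\mathbb D}^\alpha_\tau v^n=\sum_{k=1}^nB^{(n)}_{n-k}\nabla_\tau v^k$; $w^{k-\varsigma}=(1-\varsigma)w^k+\varsigma w^{k-1}$. Balanced $L2$-$1_\sigma$-sESAV scheme: $\hat\phi^1\in\mathbb V_h$ with $\|\hat\phi^1\|_\infty\le\beta$ solves $B^{(1)}_0(\hat\phi^1-\phi^0)=m(\varepsilon^2\Delta_h\hat\phi^{1-\varsigma}+f(\hat\phi^{1-\varsigma}))$;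 for $n\ge2$, $\hat\phi^n$ is the predicted solution above. For $n\ge1$ set $\hat\phi^{n-\varsigma}=(1-\varsigma)\hat\phi^n+\varsigma\phi^{n-1}$ and $V^{n-\varsigma}=V(g_h(\hat\phi^{n-\varsigma},R^{n-1}))$, and define $(\phi^n,R^n)$ by $\tilde{\mathbb D}^\alpha_\tau\phi^n=m(\varepsilon^2\Delta_h\phi^{n-\varsigma}+V^{n-\varsigma}f(\hat\phi^{n-\varsigma})-\kappa V^{n-\varsigma}(\phi^{n-\varsigma}-\hat\phi^{n-\varsigma}))$ and $\mathbb D_\tau R^n=V^{n-\varsigma}\langle-f(\hat\phi^{n-\varsigma})+\kappa(\phi^{n-\varsigma}-\hat\phi^{n-\varsigma}),\mathbb D_\tau\phi^n\rangle$. *)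

theory Defs
  imports "HOL-Analysis.Analysis"
begin

datatype nonlin = DoubleWell | FloryHuggins real real

fun nl_valid :: "nonlin \<Rightarrow> bool" where
  "nl_valid DoubleWell = True"
| "nl_valid (FloryHuggins \<theta> \<theta>c) = (0 < \<theta> \<and> \<theta> < \<theta>c)"

fun nl_F :: "nonlin \<Rightarrow> real \<Rightarrow> real" where
  "nl_F DoubleWell x = (1/4) * (1 - x^2)^2"
| "nl_F (FloryHuggins \<theta> \<theta>c) x =
     \<theta>/2 * ((1 + x) * ln (1 + x) + (1 - x) * ln (1 - x)) - \<theta>c/2 * x^2"

fun nl_f :: "nonlin \<Rightarrow> real \<Rightarrow> real" where
  "nl_f DoubleWell x = x - x^3"
| "nl_f (FloryHuggins \<theta> \<theta>c) x = \<theta>/2 * ln ((1 - x) / (1 + x)) + \<theta>c * x"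

fun nl_beta :: "nonlin \<Rightarrow> real" where
  "nl_beta DoubleWell = 1"
| "nl_beta (FloryHuggins \<theta> \<theta>c) =
     (THE b. 0 < b \<and> b < 1 \<and> nl_f (FloryHuggins \<theta> \<theta>c) b = 0)"

type_synonym grid = "int \<Rightarrow> int \<Rightarrow> real"

definition periodic_grid :: "nat \<Rightarrow> grid \<Rightarrow> bool" where
  "periodic_grid M v \<longleftrightarrow> (\<forall>i j. v (i + int M) j = v i j \<and> v i (j + int M) = v i j)"

definition grid_inner :: "nat \<Rightarrow> real \<Rightarrow> grid \<Rightarrow> grid \<Rightarrow> real" where
  "grid_inner M h v w = h^2 * (\<Sum>i\<in>{1..int M}. \<Sum>j\<in>{1..int M}. v i j * w i j)"

definition grid_lap :: "real \<Rightarrow> grid \<Rightarrow> grid" where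
  "grid_lap h v = (\<lambda>i j. (v (i+1) j + v (i-1) j + v i (j+1) + v i (j-1) - 4 * v i j) / h^2)"

definition grid_grad_sq :: "nat \<Rightarrow> real \<Rightarrow> grid \<Rightarrow> real" where
  "grid_grad_sq M h v = h^2 * (\<Sum>i\<in>{1..int M}. \<Sum>j\<in>{1..int M}.
      ((v (i+1) j - v i j) / h)^2 + ((v i (j+1) - v i j) / h)^2)"

definition E1h :: "nonlin \<Rightarrow> nat \<Rightarrow> real \<Rightarrow> grid \<Rightarrow> real" where
  "E1h nl M h v = grid_inner M h (\<lambda>i j. nl_F nl (v i j)) (\<lambda>_ _. 1)"

definition gh :: "nonlin \<Rightarrow> nat \<Rightarrow> real \<Rightarrow> grid \<Rightarrow> real \<Rightarrow> real" where
  "gh nl M h v w = exp w / exp (E1h nl M h v)"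

definition mod_energy :: "nat \<Rightarrow> real \<Rightarrow> real \<Rightarrow> grid \<Rightarrow> real \<Rightarrow> real" where
  "mod_energy M h \<epsilon> \<phi> R = \<epsilon>^2 / 2 * grid_grad_sq M h \<phi> + R"

definition tau :: "(nat \<Rightarrow> real) \<Rightarrow> nat \<Rightarrow> real" where
  "tau t k = t k - t (k - 1)"

definition ratio :: "(nat \<Rightarrow> real) \<Rightarrow> nat \<Rightarrow> real" where
  "ratio t k = tau t k / tau t (k - 1)"

definition omega :: "real \<Rightarrow> real \<Rightarrow> real" where
  "omega \<mu> s = s powr (\<mu> - 1) / Gamma \<mu>"

definition t_shift :: "real \<Rightarrow> (nat \<Rightarrow> real) \<Rightarrow> nat \<Rightarrow> real" where
  "t_shift \<sigma> t n = (1 - \<sigma>) * t n + \<sigma> * t (n - 1)"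

text \<open>aL2 alpha t n k = a^{(n)}_{n-k}  (1 <= k <= n), sigma = alpha/2.\<close>
definition aL2 :: "real \<Rightarrow> (nat \<Rightarrow> real) \<Rightarrow> nat \<Rightarrow> nat \<Rightarrow> real" where
  "aL2 \<alpha> t n k = (1 / tau t k) *
     integral {t (k - 1) .. min (t k) (t_shift (\<alpha>/2) t n)}
       (\<lambda>s. omega (1 - \<alpha>) (t_shift (\<alpha>/2) t n - s))"

text \<open>bL2 alpha t n k = b^{(n)}_{n-k}  (1 <= k <= n-1).\<close>
definition bL2 :: "real \<Rightarrow> (nat \<Rightarrow> real) \<Rightarrow> nat \<Rightarrow> nat \<Rightarrow> real" where
  "bL2 \<alpha> t n k = 2 / (tau t k * (tau t k + tau t (k + 1))) *
     integral {t (k - 1) .. t k}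
       (\<lambda>s. (s - (t k + t (k - 1)) / 2) * omega (1 - \<alpha>) (t_shift (\<alpha>/2) t n - s))"

text \<open>BL2 alpha t n k = B^{(n)}_{n-k}  (1 <= k <= n); covers all cases of the definition.\<close>
definition BL2 :: "real \<Rightarrow> (nat \<Rightarrow> real) \<Rightarrow> nat \<Rightarrow> nat \<Rightarrow> real" where
  "BL2 \<alpha> t n k = aL2 \<alpha> t n k
     + (if 2 \<le> k then bL2 \<alpha> t n (k - 1) / ratio t k else 0)
     - (if k + 1 \<le> n then bL2 \<alpha> t n k else 0)"

definition caputo_L2 :: "real \<Rightarrow> (nat \<Rightarrow> real) \<Rightarrow> (nat \<Rightarrow> grid) \<Rightarrow> nat \<Rightarrow> grid" where
  "caputo_L2 \<alpha> t \<phi> n = (\<lambda>i j. \<Sum>k=1..n. BL2 \<alpha> t n k * (\<phi> k i j - \<phi> (k - 1) i j))"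

definition clip :: "real \<Rightarrow> real \<Rightarrow> real" where
  "clip \<beta> x = min (max x (-\<beta>)) \<beta>"

definition gmix :: "real \<Rightarrow> grid \<Rightarrow> grid \<Rightarrow> grid" where
  "gmix \<sigma> u w = (\<lambda>i j. (1 - \<sigma>) * u i j + \<sigma> * w i j)"

end

theory Submission
  imports Defs
begin

definition Wf :: "real \<Rightarrow> real \<Rightarrow> real \<Rightarrow> real" where
  "Wf \<alpha> T s = (T - s) powr (-\<alpha>) / Gamma (1-\<alpha>)"
definition Gf :: "real \<Rightarrow> real \<Rightarrow> real \<Rightarrow> real" where
  "Gf \<alpha> T s = \<alpha> * (T - s) powr (-\<alpha> - 1) / Gamma (1-\<alpha>)"

lemma W_deriv:
  assumes "s < T"
  shows "((\<lambda>s. Wf \<alpha> T s) has_real_derivative Gf \<alpha> T s) (at s)"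
proof -
  have "((\<lambda>s. (T - s) powr (-\<alpha>) * (1 / Gamma (1-\<alpha>))) has_real_derivative
        (-\<alpha> * (T - s) powr (-\<alpha> - 1) * (0 - 1)) * (1 / Gamma (1-\<alpha>))) (at s)"
    using assms by (intro derivative_eq_intros refl) auto
  then show ?thesis unfolding Wf_def Gf_def by simp
qed

lemma ftc_real:
  fixes F f :: "real \<Rightarrow> real"
  assumes "a \<le> b" "\<And>x. x \<in> {a..b} \<Longrightarrow> (F has_real_derivative f x) (at x)"
  shows "(f has_integral F b - F a) {a..b}"
  using assms(1) apply (rule fundamental_theorem_of_calculus)
  using assms(2) by (simp add: has_real_derivative_iff_has_vector_derivative[symmetric] has_field_derivative_at_within)

lemma contW: "q < T \<Longrightarrow> continuous_on {p..q} (Wf \<alpha> T)"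
  unfolding Wf_def divide_inverse by (intro continuous_intros) auto
lemma contG: "q < T \<Longrightarrow> continuous_on {p..q} (Gf \<alpha> T)"
  unfolding Gf_def divide_inverse by (intro continuous_intros) auto

lemma ibp_X:
  assumes "p \<le> q" "q < T"
  shows "integral {p..q} (Wf \<alpha> T) = (q-p) * Wf \<alpha> T q - integral {p..q} (\<lambda>s. (s-p) * Gf \<alpha> T s)"
proof -
  have h0: "((\<lambda>s. Wf \<alpha> T s + (s-p) * Gf \<alpha> T s) has_integral ((q-p) * Wf \<alpha> T q - (p-p) * Wf \<alpha> T p)) {p..q}"
    using assms(1) apply (rule ftc_real[where F = "\<lambda>s. (s-p) * Wf \<alpha> T s"])
    using assms by (auto intro!: derivative_eq_intros W_deriv)
  moreover have i1: "Wf \<alpha> T integrable_on {p..q}"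
    using contW[OF assms(2)] integrable_continuous_interval by blast
  moreover have i2: "(\<lambda>s. (s-p) * Gf \<alpha> T s) integrable_on {p..q}"
    using contG[OF assms(2)] by (intro integrable_continuous_interval continuous_intros) auto
  ultimately show ?thesis
    using integral_add[OF i1 i2] integral_unique[OF h0] by simp
qed

lemma ibp_Y:
  assumes "p \<le> q" "q < T"
  shows "integral {p..q} (Wf \<alpha> T) = (q-p) * Wf \<alpha> T p + integral {p..q} (\<lambda>s. (q-s) * Gf \<alpha> T s)"
proof -
  have h0: "((\<lambda>s. Wf \<alpha> T s - (q-s) * Gf \<alpha> T s) has_integral (-(q-q) * Wf \<alpha> T q - (-(q-p)) * Wf \<alpha> T p)) {p..q}"
    using assms(1) apply (rule ftc_real[where F = "\<lambda>s. -(q-s) * Wf \<alpha> T s"])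
    using assms by (auto intro!: derivative_eq_intros W_deriv simp: algebra_simps)
  moreover have i1: "Wf \<alpha> T integrable_on {p..q}"
    using contW[OF assms(2)] integrable_continuous_interval by blast
  moreover have i2: "(\<lambda>s. (q-s) * Gf \<alpha> T s) integrable_on {p..q}"
    using contG[OF assms(2)] by (intro integrable_continuous_interval continuous_intros) auto
  ultimately have "integral {p..q} (Wf \<alpha> T) - integral {p..q} (\<lambda>s. (q - s) * Gf \<alpha> T s) = (q-p) * Wf \<alpha> T p"
    using integral_diff[OF i1 i2] integral_unique[OF h0] by (simp add: algebra_simps)
  then show ?thesis by linarith
qed

lemma ibp_Z:
  assumes "p \<le> q" "q < T"
  shows "integral {p..q} (\<lambda>s. (s - (q+p)/2) * Wf \<alpha> T s) = integral {p..q} (\<lambda>s. (s-p)*(q-s) * Gf \<alpha> T s) / 2"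
proof -
  have h0: "((\<lambda>s. (s - (q+p)/2) * Wf \<alpha> T s - ((s-p)*(q-s)/2) * Gf \<alpha> T s) has_integral
        (((q-p)*(q-q)/2) * Wf \<alpha> T q - ((p-p)*(p-q)/2) * Wf \<alpha> T p)) {p..q}"
    using assms(1) apply (rule ftc_real[where F = "\<lambda>s. ((s-p)*(s-q)/2) * Wf \<alpha> T s"])
    using assms by (auto intro!: derivative_eq_intros W_deriv simp: field_simps)
  moreover have i1: "(\<lambda>s. (s - (q+p)/2) * Wf \<alpha> T s) integrable_on {p..q}"
    using contW[OF assms(2)] by (intro integrable_continuous_interval continuous_intros) auto
  moreover have i2: "(\<lambda>s. ((s-p)*(q-s)/2) * Gf \<alpha> T s) integrable_on {p..q}"
    using contG[OF assms(2)] by (intro integrable_continuous_interval continuous_intros) auto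
  ultimately have "integral {p..q} (\<lambda>s. (s - (q+p)/2) * Wf \<alpha> T s) = integral {p..q} (\<lambda>s. ((s-p)*(q-s)/2) * Gf \<alpha> T s)"
    using integral_diff[OF i1 i2] integral_unique[OF h0] by simp
  also have "\<dots> = integral {p..q} (\<lambda>s. (s-p)*(q-s) * Gf \<alpha> T s / 2)"
    by (rule arg_cong[where f="integral _"]) (auto simp: fun_eq_iff)
  also have "\<dots> = integral {p..q} (\<lambda>s. (s-p)*(q-s) * Gf \<alpha> T s) / 2"
    by (rule integral_divide)
  finally show ?thesis .
qed


lemma int_lin:
  fixes p q c :: real
  assumes "p \<le> q"
  shows "integral {p..q} (\<lambda>s. (s-p) * c) = c * (q-p)^2 / 2"
proof -
  have "((\<lambda>s. (s-p) * c) has_integral (c*(q-p)^2/2 - c*(p-p)^2/2)) {p..q}"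
    using assms by (intro ftc_real[where F="\<lambda>s. c*(s-p)^2/2"]) (auto intro!: derivative_eq_intros simp: field_simps)
  then have "integral {p..q} (\<lambda>s. (s-p) * c) = c*(q-p)^2/2 - c*(p-p)^2/2" by (rule integral_unique)
  then show ?thesis by (simp del: integral_mult_left integral_mult_right)
qed

lemma int_quad:
  fixes p q c :: real
  assumes "p \<le> q"
  shows "integral {p..q} (\<lambda>s. (s-p)*(q-s) * c) = c * (q-p)^3 / 6"
proof -
  have "((\<lambda>s. (s-p)*(q-s) * c) has_integral
     (c*((q-p)*(q-p)^2/2 - (q-p)^3/3) - c*((q-p)*(p-p)^2/2 - (p-p)^3/3))) {p..q}"
    using assms by (intro ftc_real[where F="\<lambda>s. c*((q-p)*(s-p)^2/2 - (s-p)^3/3)"])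
       (auto intro!: derivative_eq_intros simp: field_simps power2_eq_square power3_eq_cube)
  then have "integral {p..q} (\<lambda>s. (s-p)*(q-s) * c) = (c*((q-p)*(q-p)^2/2 - (q-p)^3/3) - c*((q-p)*(p-p)^2/2 - (p-p)^3/3))" by (rule integral_unique)
  then show ?thesis by (simp del: integral_mult_left integral_mult_right add: power3_eq_cube power2_eq_square field_simps)
qed

definition XI :: "(real \<Rightarrow> real) \<Rightarrow> real \<Rightarrow> real \<Rightarrow> real" where
  "XI g p q = integral {p..q} (\<lambda>s. (s-p) * g s)"
definition YI :: "(real \<Rightarrow> real) \<Rightarrow> real \<Rightarrow> real \<Rightarrow> real" where
  "YI g p q = integral {p..q} (\<lambda>s. (q-s) * g s)"
definition ZI :: "(real \<Rightarrow> real) \<Rightarrow> real \<Rightarrow> real \<Rightarrow> real" where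
  "ZI g p q = integral {p..q} (\<lambda>s. (s-p) * (q-s) * g s)"

lemma XI_diff: "continuous_on {p..q} g1 \<Longrightarrow> continuous_on {p..q} g2 \<Longrightarrow>
   XI (\<lambda>s. g1 s - g2 s) p q = XI g1 p q - XI g2 p q"
  unfolding XI_def
  by (subst integral_diff[symmetric]) (auto intro!: integrable_continuous_interval continuous_intros simp: algebra_simps)
lemma YI_diff: "continuous_on {p..q} g1 \<Longrightarrow> continuous_on {p..q} g2 \<Longrightarrow>
   YI (\<lambda>s. g1 s - g2 s) p q = YI g1 p q - YI g2 p q"
  unfolding YI_def
  by (subst integral_diff[symmetric]) (auto intro!: integrable_continuous_interval continuous_intros simp: algebra_simps)
lemma ZI_diff: "continuous_on {p..q} g1 \<Longrightarrow> continuous_on {p..q} g2 \<Longrightarrow>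
   ZI (\<lambda>s. g1 s - g2 s) p q = ZI g1 p q - ZI g2 p q"
  unfolding ZI_def
  by (subst integral_diff[symmetric]) (auto intro!: integrable_continuous_interval continuous_intros simp: algebra_simps)

lemma XI_nonneg: "continuous_on {p..q} g \<Longrightarrow> (\<And>s. s \<in> {p..q} \<Longrightarrow> g s \<ge> 0) \<Longrightarrow> XI g p q \<ge> 0"
  unfolding XI_def by (rule integral_nonneg) (auto intro!: integrable_continuous_interval continuous_intros)
lemma ZI_nonneg: "continuous_on {p..q} g \<Longrightarrow> (\<And>s. s \<in> {p..q} \<Longrightarrow> g s \<ge> 0) \<Longrightarrow> ZI g p q \<ge> 0"
  unfolding ZI_def by (rule integral_nonneg) (auto intro!: integrable_continuous_interval continuous_intros)

lemma XI_lower: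
  assumes "p \<le> q" "continuous_on {p..q} g" "\<And>s. s \<in> {p..q} \<Longrightarrow> g s \<ge> c"
  shows "XI g p q \<ge> c * (q-p)^2/2"
proof -
  have "integral {p..q} (\<lambda>s. (s-p) * c) \<le> XI g p q"
    unfolding XI_def using assms
    by (intro integral_le) (auto intro!: integrable_continuous_interval continuous_intros mult_left_mono)
  then show ?thesis using int_lin[OF assms(1), of c] by (simp del: integral_mult_left integral_mult_right)
qed

lemma ZI_upper:
  assumes "p \<le> q" "continuous_on {p..q} g" "\<And>s. s \<in> {p..q} \<Longrightarrow> g s \<le> c"
  shows "ZI g p q \<le> c * (q-p)^3/6"
proof -
  have "ZI g p q \<le> integral {p..q} (\<lambda>s. (s-p)*(q-s) * c)"
    unfolding ZI_def using assms
    by (intro integral_le) (auto intro!: integrable_continuous_interval continuous_intros mult_left_mono)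
  then show ?thesis using int_quad[OF assms(1), of c] by (simp del: integral_mult_left integral_mult_right)
qed

lemma YZ_comb:
  assumes "continuous_on {p..q} g"
  shows "(r-p) * YI g p q - ZI g p q = integral {p..q} (\<lambda>s. (q-s)*(r-s)*g s)"
proof -
  have "(r-p) * YI g p q - ZI g p q = integral {p..q} (\<lambda>s. (r-p) * ((q-s)*g s) - (s-p)*(q-s)*g s)"
    unfolding YI_def ZI_def using assms
    by (subst integral_diff) (auto intro!: integrable_continuous_interval continuous_intros)
  also have "\<dots> = integral {p..q} (\<lambda>s. (q-s)*(r-s)*g s)"
    by (rule arg_cong[where f="integral _"]) (auto simp: fun_eq_iff algebra_simps)
  finally show ?thesis .
qed


lemma omega_W: "omega (1-\<alpha>) (T - s) = Wf \<alpha> T s"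
  by (simp add: omega_def Wf_def)

lemma t_mono0:
  fixes i j n :: nat and t :: "nat \<Rightarrow> real"
  assumes inc: "\<forall>k\<in>{1..n}. t (k-1) < (t k :: real)"
  shows "i \<le> j \<Longrightarrow> j \<le> n \<Longrightarrow> t i \<le> t j"
proof (induction j)
  case 0 then show ?case by simp
next
  case (Suc j)
  show ?case
  proof (cases "i = Suc j")
    case True then show ?thesis by simp
  next
    case False
    then have "t i \<le> t j" using Suc by auto
    moreover have "t j < t (Suc j)" using bspec[OF inc, of "Suc j"] Suc.prems by auto
    ultimately show ?thesis by simp
  qed
qed

lemma t_mono:
  fixes i j n :: nat and t :: "nat \<Rightarrow> real"
  assumes inc: "\<forall>k\<in>{1..n}. t (k-1) < (t k :: real)" and "i \<le> j" "j \<le> n"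
  shows "t i \<le> t j"
  using t_mono0[OF inc] assms(2,3) by blast

lemma t_less:
  fixes i j n :: nat and t :: "nat \<Rightarrow> real"
  assumes inc: "\<forall>k\<in>{1..n}. t (k-1) < (t k :: real)" and "i < j" "j \<le> n"
  shows "t i < t j"
proof -
  have "t i \<le> t (j-1)" using t_mono[OF inc, of i "j-1"] assms by auto
  moreover have "t (j-1) < t j" using bspec[OF inc, of j] assms by auto
  ultimately show ?thesis by simp
qed

lemma tau_pos: "\<forall>k\<in>{1..n}. t (k-1) < t k \<Longrightarrow> 1 \<le> k \<Longrightarrow> k \<le> n \<Longrightarrow> tau t k > 0"
  unfolding tau_def by auto

lemma Tn_props:
  assumes "t (n-1) < t n" "0 < \<alpha>" "\<alpha> < 1"
  shows "t (n-1) < t_shift (\<alpha>/2) t n" "t_shift (\<alpha>/2) t n \<le> t n"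
    "t_shift (\<alpha>/2) t n - t (n-1) = (1 - \<alpha>/2) * tau t n"
    "t_shift (\<alpha>/2) t n = t n - (\<alpha>/2) * tau t n"
proof -
  have "0 < (1 - \<alpha>/2) * (t n - t (n-1))" using assms by (intro mult_pos_pos) auto
  then show "t (n-1) < t_shift (\<alpha>/2) t n" unfolding t_shift_def by (simp add: algebra_simps)
  have "0 \<le> (\<alpha>/2) * (t n - t (n-1))" using assms by (intro mult_nonneg_nonneg) auto
  then show "t_shift (\<alpha>/2) t n \<le> t n" unfolding t_shift_def by (simp add: algebra_simps)
  show "t_shift (\<alpha>/2) t n - t (n-1) = (1 - \<alpha>/2) * tau t n"
    "t_shift (\<alpha>/2) t n = t n - (\<alpha>/2) * tau t n"
    unfolding t_shift_def tau_def by (auto simp: algebra_simps)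
qed

lemma tk_lt_Tn:
  assumes inc: "\<forall>k\<in>{1..n}. t (k-1) < t k" and "k + 1 \<le> n" "0 < \<alpha>" "\<alpha> < 1"
  shows "t k < t_shift (\<alpha>/2) t n"
proof -
  have "t k \<le> t (n-1)" using t_mono[OF inc, of k "n-1"] assms by auto
  moreover have "t (n-1) < t_shift (\<alpha>/2) t n" using Tn_props(1)[of t n \<alpha>] inc assms by auto
  ultimately show ?thesis by simp
qed

lemma a_Y:
  assumes inc: "\<forall>k\<in>{1..n}. t (k-1) < t k" and k: "1 \<le> k" "k + 1 \<le> n" and al: "0 < \<alpha>" "\<alpha> < 1"
  shows "aL2 \<alpha> t n k = Wf \<alpha> (t_shift (\<alpha>/2) t n) (t (k-1))
           + YI (Gf \<alpha> (t_shift (\<alpha>/2) t n)) (t (k-1)) (t k) / tau t k"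
proof -
  let ?T = "t_shift (\<alpha>/2) t n"
  have lt: "t k < ?T" using tk_lt_Tn[OF inc k(2) al] .
  have pq: "t (k-1) \<le> t k" using bspec[OF inc, of k] k by auto
  have tp: "tau t k > 0" using tau_pos[OF inc] k by auto
  have "aL2 \<alpha> t n k = (1 / tau t k) * integral {t (k-1) .. t k} (Wf \<alpha> ?T)"
    unfolding aL2_def using lt by (simp add: omega_W min_def)
  also have "\<dots> = (1 / tau t k) * ((t k - t (k-1)) * Wf \<alpha> ?T (t (k-1)) + YI (Gf \<alpha> ?T) (t (k-1)) (t k))"
    unfolding YI_def using ibp_Y[OF pq lt] by simp
  finally show ?thesis using tp by (simp add: tau_def field_simps)
qed

lemma a_X:
  assumes inc: "\<forall>k\<in>{1..n}. t (k-1) < t k" and k: "1 \<le> k" "k + 1 \<le> n" and al: "0 < \<alpha>" "\<alpha> < 1"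
  shows "aL2 \<alpha> t n k = Wf \<alpha> (t_shift (\<alpha>/2) t n) (t k)
           - XI (Gf \<alpha> (t_shift (\<alpha>/2) t n)) (t (k-1)) (t k) / tau t k"
proof -
  let ?T = "t_shift (\<alpha>/2) t n"
  have lt: "t k < ?T" using tk_lt_Tn[OF inc k(2) al] .
  have pq: "t (k-1) \<le> t k" using bspec[OF inc, of k] k by auto
  have tp: "tau t k > 0" using tau_pos[OF inc] k by auto
  have "aL2 \<alpha> t n k = (1 / tau t k) * integral {t (k-1) .. t k} (Wf \<alpha> ?T)"
    unfolding aL2_def using lt by (simp add: omega_W min_def)
  also have "\<dots> = (1 / tau t k) * ((t k - t (k-1)) * Wf \<alpha> ?T (t k) - XI (Gf \<alpha> ?T) (t (k-1)) (t k))"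
    unfolding XI_def using ibp_X[OF pq lt] by simp
  finally show ?thesis using tp by (simp add: tau_def field_simps)
qed

lemma b_Z:
  assumes inc: "\<forall>k\<in>{1..n}. t (k-1) < t k" and k: "1 \<le> k" "k + 1 \<le> n" and al: "0 < \<alpha>" "\<alpha> < 1"
  shows "bL2 \<alpha> t n k = ZI (Gf \<alpha> (t_shift (\<alpha>/2) t n)) (t (k-1)) (t k) / (tau t k * (tau t k + tau t (k+1)))"
proof -
  let ?T = "t_shift (\<alpha>/2) t n"
  have lt: "t k < ?T" using tk_lt_Tn[OF inc k(2) al] .
  have pq: "t (k-1) \<le> t k" using bspec[OF inc, of k] k by auto
  have "bL2 \<alpha> t n k = 2 / (tau t k * (tau t k + tau t (k + 1))) *
     integral {t (k - 1) .. t k} (\<lambda>s. (s - (t k + t (k - 1)) / 2) * Wf \<alpha> ?T s)"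
    unfolding bL2_def by (simp add: omega_W)
  also have "\<dots> = 2 / (tau t k * (tau t k + tau t (k + 1))) * (ZI (Gf \<alpha> ?T) (t (k-1)) (t k) / 2)"
  proof -
    have "integral {t (k - 1) .. t k} (\<lambda>s. (s - (t k + t (k - 1)) / 2) * Wf \<alpha> ?T s) = ZI (Gf \<alpha> ?T) (t (k-1)) (t k) / 2"
      unfolding ZI_def by (rule ibp_Z[OF pq lt])
    then show ?thesis by simp
  qed
  finally show ?thesis by simp
qed

lemma int_last:
  assumes "p < T" "0 < \<alpha>" "\<alpha> < 1"
  shows "integral {p..T} (\<lambda>s. omega (1-\<alpha>) (T - s)) = (T - p) powr (1-\<alpha>) / ((1-\<alpha>) * Gamma (1-\<alpha>))"
proof -
  let ?F = "\<lambda>s. - ((T - s) powr (1-\<alpha>) * (1 / ((1-\<alpha>) * Gamma (1-\<alpha>))))"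
  have g: "Gamma (1-\<alpha>) > 0" using assms by (intro Gamma_real_pos) auto
  have "((\<lambda>s. omega (1-\<alpha>) (T - s)) has_integral (?F T - ?F p)) {p..T}"
  proof (rule fundamental_theorem_of_calculus_interior)
    show "p \<le> T" using assms by simp
    show "continuous_on {p..T} ?F"
      using assms by (intro continuous_intros continuous_on_powr') auto
    fix x assume x: "x \<in> {p<..<T}"
    have "(?F has_real_derivative - (((1-\<alpha>) * (T - x) powr (1-\<alpha>-1) * (0 - 1)) * (1 / ((1-\<alpha>) * Gamma (1-\<alpha>))))) (at x)"
      using x by (intro derivative_eq_intros refl) auto
    moreover have "- (((1-\<alpha>) * (T - x) powr (1-\<alpha>-1) * (0 - 1)) * (1 / ((1-\<alpha>) * Gamma (1-\<alpha>)))) = omega (1-\<alpha>) (T - x)"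
    proof -
      have "1 - \<alpha> \<noteq> 0" using assms by simp
      then show ?thesis using g by (simp add: omega_def)
    qed
    ultimately show "(?F has_vector_derivative omega (1-\<alpha>) (T - x)) (at x)"
      by (simp add: has_real_derivative_iff_has_vector_derivative)
  qed
  then show ?thesis using assms by (simp add: integral_unique)
qed

lemma alg_last:
  fixes x y \<tau> G \<alpha> :: real
  assumes "x = (1 - \<alpha>/2) * \<tau>" "\<tau> > 0" "\<alpha> < 1" "G > 0"
  shows "(1 / \<tau>) * (x * y / ((1-\<alpha>) * G)) = (1 - \<alpha>/2) / (1-\<alpha>) * (y / G)"
  unfolding assms(1) using assms(2-) by (simp add: field_simps)

lemma a_last:
  assumes "1 \<le> n" "t (n-1) < t n" and al: "0 < \<alpha>" "\<alpha> < 1"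
  shows "aL2 \<alpha> t n n - Wf \<alpha> (t_shift (\<alpha>/2) t n) (t (n-1))
         = (\<alpha>/2) / (1-\<alpha>) * Wf \<alpha> (t_shift (\<alpha>/2) t n) (t (n-1))"
proof -
  let ?T = "t_shift (\<alpha>/2) t n"
  let ?x = "?T - t (n-1)"
  have T1: "t (n-1) < ?T" "?T \<le> t n" "?x = (1 - \<alpha>/2) * tau t n"
    using Tn_props[OF assms(2) al] by auto
  have tp: "tau t n > 0" using assms unfolding tau_def by auto
  have g: "Gamma (1-\<alpha>) > 0" using al by (intro Gamma_real_pos) auto
  have x0: "?x > 0" using T1 by simp
  have "aL2 \<alpha> t n n = (1 / tau t n) * (?x powr (1-\<alpha>) / ((1-\<alpha>) * Gamma (1-\<alpha>)))"
    unfolding aL2_def using T1 int_last[OF T1(1) al] by (simp add: min_def)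
  also have "?x powr (1-\<alpha>) = ?x * ?x powr (-\<alpha>)"
  proof -
    have "?x powr (1-\<alpha>) = ?x powr (1 + (-\<alpha>))" by simp
    also have "\<dots> = ?x powr 1 * ?x powr (-\<alpha>)" by (rule powr_add)
    finally show ?thesis using x0 by simp
  qed
  finally have "aL2 \<alpha> t n n = (1 / tau t n) * (?x * ?x powr (-\<alpha>) / ((1-\<alpha>) * Gamma (1-\<alpha>)))" .
  also have "\<dots> = (1 - \<alpha>/2) / (1-\<alpha>) * Wf \<alpha> ?T (t (n-1))"
    unfolding Wf_def using alg_last[OF T1(3) tp al(2) g] by simp
  finally show ?thesis using al by (simp add: field_simps)
qed


definition Qf :: "(nat \<Rightarrow> real) \<Rightarrow> (real \<Rightarrow> real) \<Rightarrow> nat \<Rightarrow> real" where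
  "Qf t g l = YI g (t (l-1)) (t l) / tau t l - ZI g (t (l-1)) (t l) / (tau t l * (tau t l + tau t (l+1)))"
definition Lb :: "(nat \<Rightarrow> real) \<Rightarrow> (real \<Rightarrow> real) \<Rightarrow> nat \<Rightarrow> real" where
  "Lb t g l = XI g (t (l-2)) (t (l-1)) / tau t (l-1) + ZI g (t (l-2)) (t (l-1)) / (tau t (l-1) * tau t l)
     - (if 3 \<le> l then ZI g (t (l-3)) (t (l-2)) / (tau t (l-1) * (tau t (l-2) + tau t (l-1))) else 0)"
definition dK :: "real \<Rightarrow> (nat \<Rightarrow> real) \<Rightarrow> nat \<Rightarrow> nat \<Rightarrow> real" where
  "dK \<alpha> t n l = BL2 \<alpha> t n l - (if l = 1 then 0 else BL2 \<alpha> t n (l-1))"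

lemma alg_Z1:
  fixes Z b c :: real assumes "b > 0" "c > 0"
  shows "Z / (b*(b+c)) / (c/b) + Z / (b*(b+c)) = Z / (b*c)"
proof -
  obtain u where s: "u = b + c" by simp
  have s0: "u > 0" using assms s by simp
  have "Z / (b*u) / (c/b) = Z / (c*u)" using assms s0 by (simp add: field_simps)
  moreover have "Z / (c*u) + Z / (b*u) = Z * (b + c) / (b*c*u)" using assms s0 by (simp add: field_simps)
  moreover have "Z * u / (b*c*u) = Z / (b*c)" using assms s0 by simp
  ultimately show ?thesis using s by simp
qed

lemma alg_Z0:
  fixes Z a b :: real assumes "a > 0" "b > 0"
  shows "Z / (a*(a+b)) / (b/a) = Z / (b*(a+b))"
proof -
  obtain u where s: "u = a + b" by simp
  have s0: "u > 0" using assms s by simp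
  have "Z / (a*u) / (b/a) = Z / (b*u)" using assms s0 by (simp add: field_simps)
  then show ?thesis using s by simp
qed

lemma d_mid:
  assumes inc: "\<forall>k\<in>{1..n}. t (k-1) < t k" and l: "1 \<le> l" "l + 1 \<le> n" and al: "0 < \<alpha>" "\<alpha> < 1"
  shows "dK \<alpha> t n l = (if l = 1 then Wf \<alpha> (t_shift (\<alpha>/2) t n) (t 0) else Lb t (Gf \<alpha> (t_shift (\<alpha>/2) t n)) l)
                      + Qf t (Gf \<alpha> (t_shift (\<alpha>/2) t n)) l"
proof (cases "l = 1")
  case True
  then show ?thesis
    using a_Y[OF inc l al] b_Z[OF inc l al] l
    unfolding dK_def BL2_def Qf_def by simp
next
  case False
  then obtain j where lj: "l = Suc (Suc j)" using l by (metis One_nat_def Suc_le_D le_SucE not_less_eq_eq)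
  let ?T = "t_shift (\<alpha>/2) t n" let ?G = "Gf \<alpha> ?T"
  have tp: "\<And>k. 1 \<le> k \<Longrightarrow> k \<le> n \<Longrightarrow> tau t k > 0" using tau_pos[OF inc] by auto
  have aY: "aL2 \<alpha> t n l = Wf \<alpha> ?T (t (Suc j)) + YI ?G (t (Suc j)) (t l) / tau t l"
    using a_Y[OF inc l al] lj by simp
  have aX: "aL2 \<alpha> t n (Suc j) = Wf \<alpha> ?T (t (Suc j)) - XI ?G (t j) (t (Suc j)) / tau t (Suc j)"
    using a_X[OF inc _ _ al, of "Suc j"] lj l by simp
  have bl: "bL2 \<alpha> t n l = ZI ?G (t (Suc j)) (t l) / (tau t l * (tau t l + tau t (l+1)))"
    using b_Z[OF inc l al] lj by simp
  have bl1: "bL2 \<alpha> t n (Suc j) = ZI ?G (t j) (t (Suc j)) / (tau t (Suc j) * (tau t (Suc j) + tau t l))"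
    using b_Z[OF inc _ _ al, of "Suc j"] lj l by simp
  have t1: "tau t l > 0" "tau t (Suc j) > 0" "tau t (l+1) > 0" using tp lj l by auto
  show ?thesis
  proof (cases "j = 0")
    case True
    have "dK \<alpha> t n l = (Wf \<alpha> ?T (t (Suc j)) + YI ?G (t (Suc j)) (t l) / tau t l)
       + ZI ?G (t j) (t (Suc j)) / (tau t (Suc j) * (tau t (Suc j) + tau t l)) / (tau t l / tau t (Suc j))
       - ZI ?G (t (Suc j)) (t l) / (tau t l * (tau t l + tau t (l+1)))
       - (Wf \<alpha> ?T (t (Suc j)) - XI ?G (t j) (t (Suc j)) / tau t (Suc j)
          - ZI ?G (t j) (t (Suc j)) / (tau t (Suc j) * (tau t (Suc j) + tau t l)))"
      unfolding dK_def BL2_def using aY aX bl bl1 lj l True by (simp add: ratio_def)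
    also have "\<dots> = Lb t ?G l + Qf t ?G l"
      unfolding Lb_def Qf_def using lj True alg_Z1[OF t1(2) t1(1), of "ZI ?G (t j) (t (Suc j))"] by simp
    finally show ?thesis using lj by simp
  next
    case False
    have bl2: "bL2 \<alpha> t n j = ZI ?G (t (j-1)) (t j) / (tau t j * (tau t j + tau t (Suc j)))"
      using b_Z[OF inc _ _ al, of j] lj l False by simp
    have t2: "tau t j > 0" using tp lj l False by auto
    have "dK \<alpha> t n l = (Wf \<alpha> ?T (t (Suc j)) + YI ?G (t (Suc j)) (t l) / tau t l)
       + ZI ?G (t j) (t (Suc j)) / (tau t (Suc j) * (tau t (Suc j) + tau t l)) / (tau t l / tau t (Suc j))
       - ZI ?G (t (Suc j)) (t l) / (tau t l * (tau t l + tau t (l+1)))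
       - (Wf \<alpha> ?T (t (Suc j)) - XI ?G (t j) (t (Suc j)) / tau t (Suc j)
          + ZI ?G (t (j-1)) (t j) / (tau t j * (tau t j + tau t (Suc j))) / (tau t (Suc j) / tau t j)
          - ZI ?G (t j) (t (Suc j)) / (tau t (Suc j) * (tau t (Suc j) + tau t l)))"
      unfolding dK_def BL2_def using aY aX bl bl1 bl2 lj l False by (simp add: ratio_def)
    also have "\<dots> = Lb t ?G l + Qf t ?G l"
      unfolding Lb_def Qf_def using lj False alg_Z1[OF t1(2) t1(1), of "ZI ?G (t j) (t (Suc j))"]
        alg_Z0[OF t2 t1(2), of "ZI ?G (t (j-1)) (t j)"] by simp
    finally show ?thesis using lj by simp
  qed
qed

lemma d_last:
  assumes inc: "\<forall>k\<in>{1..n}. t (k-1) < t k" and n: "1 \<le> n" and al: "0 < \<alpha>" "\<alpha> < 1"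
  shows "dK \<alpha> t n n = (aL2 \<alpha> t n n - Wf \<alpha> (t_shift (\<alpha>/2) t n) (t (n-1)))
       + (if n = 1 then Wf \<alpha> (t_shift (\<alpha>/2) t n) (t 0) else Lb t (Gf \<alpha> (t_shift (\<alpha>/2) t n)) n)"
proof (cases "n = 1")
  case True
  then show ?thesis unfolding dK_def BL2_def by simp
next
  case False
  then obtain j where lj: "n = Suc (Suc j)" using n by (metis One_nat_def Suc_le_D le_SucE not_less_eq_eq)
  let ?T = "t_shift (\<alpha>/2) t n" let ?G = "Gf \<alpha> ?T"
  have tp: "\<And>k. 1 \<le> k \<Longrightarrow> k \<le> n \<Longrightarrow> tau t k > 0" using tau_pos[OF inc] by auto
  have aX: "aL2 \<alpha> t n (Suc j) = Wf \<alpha> ?T (t (Suc j)) - XI ?G (t j) (t (Suc j)) / tau t (Suc j)"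
    using a_X[OF inc _ _ al, of "Suc j"] lj by simp
  have bl1: "bL2 \<alpha> t n (Suc j) = ZI ?G (t j) (t (Suc j)) / (tau t (Suc j) * (tau t (Suc j) + tau t n))"
    using b_Z[OF inc _ _ al, of "Suc j"] lj by simp
  have t1: "tau t n > 0" "tau t (Suc j) > 0" using tp lj by auto
  show ?thesis
  proof (cases "j = 0")
    case True
    have "dK \<alpha> t n n = aL2 \<alpha> t n n
       + ZI ?G (t j) (t (Suc j)) / (tau t (Suc j) * (tau t (Suc j) + tau t n)) / (tau t n / tau t (Suc j))
       - (Wf \<alpha> ?T (t (Suc j)) - XI ?G (t j) (t (Suc j)) / tau t (Suc j)
          - ZI ?G (t j) (t (Suc j)) / (tau t (Suc j) * (tau t (Suc j) + tau t n)))"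
      unfolding dK_def BL2_def using aX bl1 lj True by (simp add: ratio_def)
    also have "\<dots> = (aL2 \<alpha> t n n - Wf \<alpha> ?T (t (n-1))) + Lb t ?G n"
      unfolding Lb_def using lj True alg_Z1[OF t1(2) t1(1), of "ZI ?G (t j) (t (Suc j))"] by simp
    finally show ?thesis using lj by simp
  next
    case False
    have bl2: "bL2 \<alpha> t n j = ZI ?G (t (j-1)) (t j) / (tau t j * (tau t j + tau t (Suc j)))"
      using b_Z[OF inc _ _ al, of j] lj False by simp
    have t2: "tau t j > 0" using tp lj False by auto
    have "dK \<alpha> t n n = aL2 \<alpha> t n n
       + ZI ?G (t j) (t (Suc j)) / (tau t (Suc j) * (tau t (Suc j) + tau t n)) / (tau t n / tau t (Suc j))
       - (Wf \<alpha> ?T (t (Suc j)) - XI ?G (t j) (t (Suc j)) / tau t (Suc j)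
          + ZI ?G (t (j-1)) (t j) / (tau t j * (tau t j + tau t (Suc j))) / (tau t (Suc j) / tau t j)
          - ZI ?G (t j) (t (Suc j)) / (tau t (Suc j) * (tau t (Suc j) + tau t n)))"
      unfolding dK_def BL2_def using aX bl1 bl2 lj False by (simp add: ratio_def)
    also have "\<dots> = (aL2 \<alpha> t n n - Wf \<alpha> ?T (t (n-1))) + Lb t ?G n"
      unfolding Lb_def using lj False alg_Z1[OF t1(2) t1(1), of "ZI ?G (t j) (t (Suc j))"]
        alg_Z0[OF t2 t1(2), of "ZI ?G (t (j-1)) (t j)"] by simp
    finally show ?thesis using lj by simp
  qed
qed

lemma Qf_nonneg:
  assumes "t (l-1) < t l" "t l < t (l+1)" "continuous_on {t (l-1)..t l} g"
    "\<And>s. s \<in> {t (l-1)..t l} \<Longrightarrow> g s \<ge> 0"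
  shows "Qf t g l \<ge> 0"
proof -
  have tp: "tau t l > 0" "tau t (l+1) > 0" using assms unfolding tau_def by auto
  have e: "t (l+1) - t (l-1) = tau t l + tau t (l+1)" unfolding tau_def by simp
  have "(tau t l + tau t (l+1)) * YI g (t (l-1)) (t l) - ZI g (t (l-1)) (t l) \<ge> 0"
    unfolding e[symmetric] YZ_comb[OF assms(3)] using assms
    by (intro integral_nonneg) (auto intro!: integrable_continuous_interval continuous_intros mult_nonneg_nonneg)
  moreover have "Qf t g l = ((tau t l + tau t (l+1)) * YI g (t (l-1)) (t l) - ZI g (t (l-1)) (t l)) / (tau t l * (tau t l + tau t (l+1)))"
  proof -
    obtain u where u: "u = tau t l + tau t (l+1)" by simp
    have "u > 0" using tp u by simp
    then have "YI g (t (l-1)) (t l) / tau t l - ZI g (t (l-1)) (t l) / (tau t l * u) = (u * YI g (t (l-1)) (t l) - ZI g (t (l-1)) (t l)) / (tau t l * u)"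
      using tp by (simp add: field_simps)
    then show ?thesis unfolding Qf_def u by simp
  qed
  ultimately show ?thesis using tp by (simp add: Qf_def)
qed

lemma ratio_arith:
  fixes a b g :: real
  assumes "a > 0" "b \<ge> 4/7 * a" "g \<ge> 0"
  shows "g * b / 2 - g * a^3 / (6 * b * (a + b)) \<ge> 0"
proof -
  have b0: "b > 0" using assms by simp
  have "b^2 \<ge> (4/7*a)^2" using assms by (intro power_mono) auto
  moreover have "a + b \<ge> 11/7 * a" using assms by simp
  ultimately have "b^2 * (a+b) \<ge> (4/7*a)^2 * (11/7*a)" using assms by (intro mult_mono) auto
  moreover have "(4/7*a)^2 * (11/7*a) = 176/343 * a^3" by (simp add: power2_eq_square power3_eq_cube)
  moreover have "a^3 \<ge> 0" using assms by simp
  ultimately have "3 * (b^2 * (a+b)) \<ge> a^3" by linarith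
  then have h3: "3 * b^2 * (a+b) \<ge> a^3" by (simp add: algebra_simps)
  have den: "6 * b * (a + b) > 0" using b0 assms by simp
  have eq: "b / 2 * (6 * b * (a + b)) = 3 * b^2 * (a+b)" by (simp add: power2_eq_square)
  have "a^3 \<le> b / 2 * (6 * b * (a + b))" unfolding eq by (rule h3)
  then have "a^3 / (6 * b * (a + b)) \<le> b / 2" using den by (simp only: pos_divide_le_eq)
  then have "g * (a^3 / (6 * b * (a + b))) \<le> g * (b / 2)" using assms by (intro mult_left_mono) auto
  then show ?thesis by simp
qed

lemma Lb_nonneg:
  assumes l: "2 \<le> l" and inc: "\<forall>k\<in>{1..l}. t (k-1) < t k"
    and cont: "continuous_on {t (l-3)..t (l-1)} g"
    and nn: "\<And>s. s \<in> {t (l-3)..t (l-1)} \<Longrightarrow> g s \<ge> 0"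
    and mono: "\<And>x y. x \<in> {t (l-3)..t (l-1)} \<Longrightarrow> y \<in> {t (l-3)..t (l-1)} \<Longrightarrow> x \<le> y \<Longrightarrow> g x \<le> g y"
    and rat: "3 \<le> l \<Longrightarrow> tau t (l-1) \<ge> 4/7 * tau t (l-2)"
  shows "Lb t g l \<ge> 0"
proof -
  have tp: "\<And>k. 1 \<le> k \<Longrightarrow> k \<le> l \<Longrightarrow> tau t k > 0" using tau_pos[OF inc] by auto
  have m1: "t (l-3) \<le> t (l-2)" "t (l-2) \<le> t (l-1)" using t_mono[OF inc] by auto
  have c2: "continuous_on {t (l-2)..t (l-1)} g" by (rule continuous_on_subset[OF cont]) (use m1 in auto)
  have Z1: "ZI g (t (l-2)) (t (l-1)) \<ge> 0" using c2 nn m1 by (intro ZI_nonneg) auto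
  show ?thesis
  proof (cases "3 \<le> l")
    case False
    have X1: "XI g (t (l-2)) (t (l-1)) \<ge> 0" using c2 nn m1 by (intro XI_nonneg) auto
    have "tau t (l-1) > 0" "tau t l > 0" using tp l by auto
    then show ?thesis unfolding Lb_def using False X1 Z1 by simp
  next
    case True
    let ?g0 = "g (t (l-2))"
    have g0: "?g0 \<ge> 0" using nn m1 by auto
    have c3: "continuous_on {t (l-3)..t (l-2)} g" by (rule continuous_on_subset[OF cont]) (use m1 in auto)
    have X1: "XI g (t (l-2)) (t (l-1)) \<ge> ?g0 * (t (l-1) - t (l-2))^2/2"
      using m1 c2 by (intro XI_lower) (auto intro!: mono)
    have Z0: "ZI g (t (l-3)) (t (l-2)) \<le> ?g0 * (t (l-2) - t (l-3))^3/6"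
      using m1 c3 by (intro ZI_upper) (auto intro!: mono)
    have e1: "t (l-1) - t (l-2) = tau t (l-1)" and e0: "t (l-2) - t (l-3) = tau t (l-2)"
      unfolding tau_def using True by (simp_all add: numeral_3_eq_3) (metis Suc_diff_Suc diff_Suc_1 diff_diff_left less_eq_Suc_le numeral_2_eq_2 one_add_one)
    have ta: "tau t (l-2) > 0" "tau t (l-1) > 0" "tau t l > 0" using tp True by auto
    have "Lb t g l \<ge> ?g0 * tau t (l-1) / 2 - ?g0 * tau t (l-2)^3 / (6 * tau t (l-1) * (tau t (l-2) + tau t (l-1)))"
    proof -
      have A: "XI g (t (l-2)) (t (l-1)) / tau t (l-1) \<ge> ?g0 * tau t (l-1) / 2"
        using X1 ta unfolding e1 by (simp add: field_simps power2_eq_square)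
      have B: "ZI g (t (l-2)) (t (l-1)) / (tau t (l-1) * tau t l) \<ge> 0" using Z1 ta by simp
      have C: "ZI g (t (l-3)) (t (l-2)) / (tau t (l-1) * (tau t (l-2) + tau t (l-1)))
             \<le> ?g0 * tau t (l-2)^3 / (6 * tau t (l-1) * (tau t (l-2) + tau t (l-1)))"
      proof -
        have "ZI g (t (l-3)) (t (l-2)) \<le> ?g0 * tau t (l-2)^3 / 6" using Z0 unfolding e0 .
        then have "ZI g (t (l-3)) (t (l-2)) / (tau t (l-1) * (tau t (l-2) + tau t (l-1)))
             \<le> (?g0 * tau t (l-2)^3 / 6) / (tau t (l-1) * (tau t (l-2) + tau t (l-1)))"
          using ta by (intro divide_right_mono) auto
        then show ?thesis by simp
      qed
      show ?thesis unfolding Lb_def using True A B C by simp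
    qed
    moreover have "?g0 * tau t (l-1) / 2 - ?g0 * tau t (l-2)^3 / (6 * tau t (l-1) * (tau t (l-2) + tau t (l-1))) \<ge> 0"
      using ratio_arith[OF ta(1) rat[OF True] g0] .
    ultimately show ?thesis by linarith
  qed
qed



lemma Gam_pos: "(\<alpha>::real) < 1 \<Longrightarrow> Gamma (1-\<alpha>) > 0"
  by (rule Gamma_real_pos) simp

lemma G_nonneg: "0 \<le> \<alpha> \<Longrightarrow> \<alpha> < 1 \<Longrightarrow> Gf \<alpha> T s \<ge> 0"
  unfolding Gf_def using Gam_pos[of \<alpha>] by simp
lemma W_nonneg: "\<alpha> < 1 \<Longrightarrow> Wf \<alpha> T s \<ge> 0"
  unfolding Wf_def using Gam_pos[of \<alpha>] by simp

lemma G_mono: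
  assumes "0 \<le> \<alpha>" "\<alpha> < 1" "s1 \<le> s2" "s2 < T"
  shows "Gf \<alpha> T s1 \<le> Gf \<alpha> T s2"
proof -
  have "(T - s1) powr (-\<alpha>-1) \<le> (T - s2) powr (-\<alpha>-1)"
    using assms by (intro powr_mono2') auto
  then show ?thesis unfolding Gf_def using assms Gam_pos[of \<alpha>]
    by (intro divide_right_mono mult_left_mono) auto
qed

lemma G_diff_nonneg:
  assumes "0 \<le> \<alpha>" "\<alpha> < 1" "s < T1" "T1 \<le> T2"
  shows "Gf \<alpha> T2 s \<le> Gf \<alpha> T1 s"
proof -
  have "(T2 - s) powr (-\<alpha>-1) \<le> (T1 - s) powr (-\<alpha>-1)"
    using assms by (intro powr_mono2') auto
  then show ?thesis unfolding Gf_def using assms Gam_pos[of \<alpha>]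
    by (intro divide_right_mono mult_left_mono) auto
qed

lemma W_T_mono:
  assumes "\<alpha> \<ge> 0" "\<alpha> < 1" "s < T1" "T1 \<le> T2"
  shows "Wf \<alpha> T2 s \<le> Wf \<alpha> T1 s"
proof -
  have "(T2 - s) powr (-\<alpha>) \<le> (T1 - s) powr (-\<alpha>)"
    using assms by (intro powr_mono2') auto
  then show ?thesis unfolding Wf_def using assms Gam_pos[of \<alpha>]
    by (intro divide_right_mono) auto
qed

lemma powr_diff_decr:
  fixes e \<delta> x1 x2 :: real
  assumes "e < 0" "\<delta> > 0" "0 < x2" "x2 \<le> x1"
  shows "x1 powr e - (x1 + \<delta>) powr e \<le> x2 powr e - (x2 + \<delta>) powr e"
proof -
  have "(\<lambda>x. x powr e - (x + \<delta>) powr e) x2 \<ge> (\<lambda>x. x powr e - (x + \<delta>) powr e) x1"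
  proof (rule DERIV_nonpos_imp_nonincreasing[OF assms(4)])
    fix x assume x: "x2 \<le> x" "x \<le> x1"
    then have x0: "x > 0" using assms by simp
    have "((\<lambda>x. x powr e - (x + \<delta>) powr e) has_real_derivative
            (e * x powr (e - 1) - e * (x + \<delta>) powr (e - 1) * (1 + 0))) (at x)"
      using x0 assms by (intro derivative_eq_intros refl) auto
    moreover have "e * x powr (e - 1) - e * (x + \<delta>) powr (e - 1) * (1 + 0) \<le> 0"
    proof -
      have "(x + \<delta>) powr (e - 1) \<le> x powr (e - 1)" using x0 assms by (intro powr_mono2') auto
      then have "e * x powr (e - 1) \<le> e * (x + \<delta>) powr (e - 1)" using assms
        by (intro mult_left_mono_neg) auto
      then show ?thesis by simp
    qed
    ultimately show "\<exists>y. ((\<lambda>x. x powr e - (x + \<delta>) powr e) has_real_derivative y) (at x) \<and> y \<le> 0" by blast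
  qed
  then show ?thesis by simp
qed

lemma G_diff_mono:
  assumes "0 \<le> \<alpha>" "\<alpha> < 1" "s1 \<le> s2" "s2 < T1" "T1 < T2"
  shows "Gf \<alpha> T1 s1 - Gf \<alpha> T2 s1 \<le> Gf \<alpha> T1 s2 - Gf \<alpha> T2 s2"
proof (cases "\<alpha> = 0")
  case True then show ?thesis unfolding Gf_def by simp
next
  case False
  have "(T1 - s1) powr (-\<alpha>-1) - ((T1 - s1) + (T2 - T1)) powr (-\<alpha>-1)
        \<le> (T1 - s2) powr (-\<alpha>-1) - ((T1 - s2) + (T2 - T1)) powr (-\<alpha>-1)"
    using assms by (intro powr_diff_decr) auto
  then have "(T1 - s1) powr (-\<alpha>-1) - (T2 - s1) powr (-\<alpha>-1) \<le> (T1 - s2) powr (-\<alpha>-1) - (T2 - s2) powr (-\<alpha>-1)"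
    by simp
  then have "\<alpha> / Gamma (1-\<alpha>) * ((T1 - s1) powr (-\<alpha>-1) - (T2 - s1) powr (-\<alpha>-1))
        \<le> \<alpha> / Gamma (1-\<alpha>) * ((T1 - s2) powr (-\<alpha>-1) - (T2 - s2) powr (-\<alpha>-1))"
    using assms Gam_pos[of \<alpha>] by (intro mult_left_mono) auto
  then show ?thesis unfolding Gf_def by (simp add: algebra_simps)
qed



lemma int_pow_end:
  fixes p q a :: real
  assumes "p \<le> q" "0 \<le> a"
  shows "integral {p..q} (\<lambda>s. (q - s) powr a) = (q - p) powr (a+1) / (a+1)"
proof -
  let ?F = "\<lambda>s. - ((q - s) powr (a+1) / (a+1))"
  have "((\<lambda>s. (q - s) powr a) has_integral (?F q - ?F p)) {p..q}"
  proof (rule fundamental_theorem_of_calculus_interior)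
    show "p \<le> q" using assms by simp
    show "continuous_on {p..q} ?F"
      using assms by (intro continuous_intros continuous_on_powr') auto
    fix x assume x: "x \<in> {p<..<q}"
    have "(?F has_real_derivative - (((a+1) * (q - x) powr (a+1-1) * (0 - 1)) / (a+1))) (at x)"
      using x assms by (intro derivative_eq_intros refl) auto
    moreover have "- (((a+1) * (q - x) powr (a+1-1) * (0 - 1)) / (a+1)) = (q - x) powr a"
      using assms by simp
    ultimately show "(?F has_vector_derivative (q - x) powr a) (at x)"
      by (simp add: has_real_derivative_iff_has_vector_derivative)
  qed
  then show ?thesis using assms by (simp add: integral_unique)
qed

lemma Qf_repr:
  assumes "t (l-1) < t l" "t l < t (l+1)" "continuous_on {t (l-1)..t l} g"
  shows "Qf t g l = integral {t (l-1)..t l} (\<lambda>s. (t l - s)*(t (l+1) - s)*g s) / (tau t l * (tau t l + tau t (l+1)))"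
proof -
  have tp: "tau t l > 0" "tau t (l+1) > 0" using assms unfolding tau_def by auto
  have e: "t (l+1) - t (l-1) = tau t l + tau t (l+1)" unfolding tau_def by simp
  have c: "(tau t l + tau t (l+1)) * YI g (t (l-1)) (t l) - ZI g (t (l-1)) (t l) = integral {t (l-1)..t l} (\<lambda>s. (t l - s)*(t (l+1) - s)*g s)"
    unfolding e[symmetric] YZ_comb[OF assms(3)] ..
  obtain u where u: "u = tau t l + tau t (l+1)" by simp
  have "u > 0" using tp u by simp
  then have "YI g (t (l-1)) (t l) / tau t l - ZI g (t (l-1)) (t l) / (tau t l * u) = (u * YI g (t (l-1)) (t l) - ZI g (t (l-1)) (t l)) / (tau t l * u)"
    using tp by (simp add: field_simps)
  then show ?thesis unfolding Qf_def using c u by simp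
qed

lemma final_arith:
  fixes \<alpha> \<tau> \<tau>' A \<Gamma> E I :: real
  assumes al: "0 < \<alpha>" "\<alpha> < 1" and tt: "\<tau> > 0" "\<tau>' > 0" and A: "A \<ge> 0" and G: "\<Gamma> > 0" and E: "E \<ge> 1"
    and I: "I \<le> \<alpha> / ((1 - \<alpha>/2) * \<Gamma>) * (\<tau>^2 * A) / (2 - \<alpha>)"
  shows "I / (\<tau> * (\<tau> + \<tau>')) \<le> (\<alpha>/2) / (1-\<alpha>) * (E * A / \<Gamma>)"
proof -
  let ?K = "\<alpha> / ((1 - \<alpha>/2) * \<Gamma> * (2 - \<alpha>))"
  have K0: "?K \<ge> 0" using al G by simp
  have I': "I \<le> ?K * A * \<tau>^2" using I by (simp add: field_simps)
  have d0: "\<tau> * (\<tau> + \<tau>') > 0" using tt by simp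
  have "I / (\<tau> * (\<tau> + \<tau>')) \<le> ?K * A"
  proof -
    have KA: "?K * A \<ge> 0" using K0 A by (rule mult_nonneg_nonneg)
    have "\<tau>^2 \<le> \<tau> * (\<tau> + \<tau>')" using tt by (simp add: power2_eq_square algebra_simps)
    then have "?K * A * \<tau>^2 \<le> ?K * A * (\<tau> * (\<tau> + \<tau>'))"
      using KA by (rule mult_left_mono)
    then have "I \<le> ?K * A * (\<tau> * (\<tau> + \<tau>'))" using I' by linarith
    then show ?thesis using d0 by (simp add: pos_divide_le_eq)
  qed
  also have "?K \<le> (\<alpha>/2) / (1-\<alpha>) / \<Gamma>"
  proof -
    have "(1 - \<alpha>/2) * (2 - \<alpha>) = (2-\<alpha>)^2/2" by (simp add: power2_eq_square field_simps)
    have "4 * (1-\<alpha>) \<le> (2-\<alpha>)^2" by (simp add: power2_eq_square algebra_simps)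
    have p1: "(1 - \<alpha>/2) * (2 - \<alpha>) > 0" "1 - \<alpha> > 0" using al by auto
    have "\<alpha> * (1-\<alpha>) \<le> (\<alpha>/2) * ((1 - \<alpha>/2) * (2 - \<alpha>))"
      using al by (simp add: algebra_simps power2_eq_square)
    then have "\<alpha> / ((1 - \<alpha>/2) * (2 - \<alpha>)) \<le> (\<alpha>/2) / (1-\<alpha>)"
      using p1 al by (simp add: divide_simps mult.commute)
    then have "\<alpha> / ((1 - \<alpha>/2) * (2 - \<alpha>)) / \<Gamma> \<le> (\<alpha>/2) / (1-\<alpha>) / \<Gamma>"
      using G by (intro divide_right_mono) auto
    then show ?thesis by (simp add: field_simps)
  qed
  then have "?K * A \<le> (\<alpha>/2) / (1-\<alpha>) / \<Gamma> * A" using A by (intro mult_right_mono) auto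
  also have "\<dots> \<le> (\<alpha>/2) / (1-\<alpha>) / \<Gamma> * (E * A)"
    using A E al G by (intro mult_left_mono) (auto simp: mult_le_cancel_right1)
  also have "\<dots> = (\<alpha>/2) / (1-\<alpha>) * (E * A / \<Gamma>)" by simp
  finally show ?thesis .
qed



lemma pw_bound:
  fixes \<alpha> p q r s :: real
  assumes al: "0 < \<alpha>" "\<alpha> < 1" and s: "p \<le> s" "s \<le> q" and qr: "q < r"
  shows "(q-s)*(r-s)*Gf \<alpha> (r - (\<alpha>/2)*(r-q)) s \<le> \<alpha> / ((1-\<alpha>/2) * Gamma (1-\<alpha>)) * (q-s) powr (1-\<alpha>)"
proof -
  let ?T = "r - (\<alpha>/2)*(r-q)"
  define x where "x = q - s"
  define y where "y = ?T - s"
  have x0: "x \<ge> 0" using s x_def by simp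
  have yx: "y \<ge> x"
  proof -
    have "(1 - \<alpha>/2) * (r - q) \<ge> 0" using al qr by (intro mult_nonneg_nonneg) auto
    then show ?thesis unfolding x_def y_def by (simp add: algebra_simps)
  qed
  have y0: "y > 0"
  proof -
    have "(1 - \<alpha>/2) * (r - q) > 0" using al qr by (intro mult_pos_pos) auto
    then show ?thesis unfolding y_def using s by (simp add: algebra_simps)
  qed
  have Gm: "Gamma (1-\<alpha>) > 0" using Gam_pos[OF al(2)] .
  have hs: "1 - \<alpha>/2 > 0" using al by simp
  have rs: "(1 - \<alpha>/2) * (r - s) \<le> y"
  proof -
    have e: "y - (1 - \<alpha>/2) * (r - s) = (\<alpha>/2) * (q - s)" unfolding y_def by (simp add: field_simps)
    have "(\<alpha>/2) * (q - s) \<ge> 0" using al s by (intro mult_nonneg_nonneg) auto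
    then show ?thesis using e by linarith
  qed
  have rs': "r - s \<le> y / (1 - \<alpha>/2)" using rs hs by (simp add: field_simps)
  have yy: "y * y powr (-\<alpha>-1) = y powr (-\<alpha>)"
  proof -
    have "y powr (-\<alpha>) = y powr (1 + (-\<alpha>-1))" by simp
    also have "\<dots> = y powr 1 * y powr (-\<alpha>-1)" by (rule powr_add)
    finally show ?thesis using y0 by simp
  qed
  have xy: "x * y powr (-\<alpha>) \<le> x powr (1-\<alpha>)"
  proof (cases "x = 0")
    case True then show ?thesis by simp
  next
    case False
    then have xp: "x > 0" using x0 by simp
    have "y powr (-\<alpha>) \<le> x powr (-\<alpha>)" using xp yx al by (intro powr_mono2') auto
    then have "x * y powr (-\<alpha>) \<le> x * x powr (-\<alpha>)" using x0 by (intro mult_left_mono) auto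
    also have "x * x powr (-\<alpha>) = x powr (1-\<alpha>)"
    proof -
      have "x powr (1-\<alpha>) = x powr (1 + (-\<alpha>))" by simp
      also have "\<dots> = x powr 1 * x powr (-\<alpha>)" by (rule powr_add)
      finally show ?thesis using xp by simp
    qed
    finally show ?thesis .
  qed
  have G: "Gf \<alpha> ?T s = \<alpha> * y powr (-\<alpha>-1) / Gamma (1-\<alpha>)" unfolding Gf_def y_def ..
  have Gn: "\<alpha> * y powr (-\<alpha>-1) / Gamma (1-\<alpha>) \<ge> 0" using al Gm by simp
  have "(q-s)*(r-s)*Gf \<alpha> ?T s = x * ((r-s) * (\<alpha> * y powr (-\<alpha>-1) / Gamma (1-\<alpha>)))"
    unfolding G x_def by simp
  also have "\<dots> \<le> x * (y / (1 - \<alpha>/2) * (\<alpha> * y powr (-\<alpha>-1) / Gamma (1-\<alpha>)))"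
    using x0 Gn rs' by (intro mult_left_mono mult_right_mono) auto
  also have "\<dots> = \<alpha> / ((1-\<alpha>/2) * Gamma (1-\<alpha>)) * (x * (y * y powr (-\<alpha>-1)))"
    by (simp add: field_simps)
  also have "\<dots> = \<alpha> / ((1-\<alpha>/2) * Gamma (1-\<alpha>)) * (x * y powr (-\<alpha>))" unfolding yy ..
  also have "\<dots> \<le> \<alpha> / ((1-\<alpha>/2) * Gamma (1-\<alpha>)) * x powr (1-\<alpha>)"
    using xy al hs Gm by (intro mult_left_mono) auto
  finally show ?thesis unfolding x_def .
qed



lemma Q_est:
  assumes inc: "\<forall>k\<in>{1..N}. t (k-1) < t k" and k: "1 \<le> k" "k + 1 \<le> N" and al: "0 < \<alpha>" "\<alpha> < 1"
  shows "Qf t (Gf \<alpha> (t_shift (\<alpha>/2) t (k+1))) k \<le> (\<alpha>/2)/(1-\<alpha>) * Wf \<alpha> (t_shift (\<alpha>/2) t k) (t (k-1))"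
proof -
  let ?T' = "t_shift (\<alpha>/2) t (k+1)" let ?T = "t_shift (\<alpha>/2) t k"
  let ?p = "t (k-1)" let ?q = "t k" let ?r = "t (k+1)"
  have pq: "?p < ?q" using inc k by auto
  have qr: "?q < ?r" using bspec[OF inc, of "k+1"] k by auto
  have T'e: "?T' = ?r - (\<alpha>/2) * (?r - ?q)" using Tn_props(4)[of t "k+1" \<alpha>] qr al unfolding tau_def by simp
  have T'q: "?q < ?T'" using Tn_props(1)[of t "k+1" \<alpha>] qr al by simp
  have cG: "continuous_on {?p..?q} (Gf \<alpha> ?T')" using contG[OF T'q] .
  define \<tau> where "\<tau> = tau t k"
  define \<tau>' where "\<tau>' = tau t (k+1)"
  have tt: "\<tau> > 0" "\<tau>' > 0" using pq qr unfolding \<tau>_def \<tau>'_def tau_def by auto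
  have qp: "?q - ?p = \<tau>" unfolding \<tau>_def tau_def ..
  define I where "I = integral {?p..?q} (\<lambda>s. (?q - s)*(?r - s)*Gf \<alpha> ?T' s)"
  have Qr: "Qf t (Gf \<alpha> ?T') k = I / (\<tau> * (\<tau> + \<tau>'))"
    unfolding I_def \<tau>_def \<tau>'_def using Qf_repr[of t k, OF pq qr cG] by simp
  define c where "c = \<alpha> / ((1-\<alpha>/2) * Gamma (1-\<alpha>))"
  define A where "A = \<tau> powr (-\<alpha>)"
  have "I \<le> integral {?p..?q} (\<lambda>s. c * (?q - s) powr (1-\<alpha>))"
    unfolding I_def
  proof (rule integral_le)
    show "(\<lambda>s. (?q - s)*(?r - s)*Gf \<alpha> ?T' s) integrable_on {?p..?q}"
      using cG by (intro integrable_continuous_interval continuous_intros)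
    show "(\<lambda>s. c * (?q - s) powr (1-\<alpha>)) integrable_on {?p..?q}"
      using al by (intro integrable_continuous_interval continuous_intros continuous_on_powr') auto
    fix s assume "s \<in> {?p..?q}"
    then show "(?q - s)*(?r - s)*Gf \<alpha> ?T' s \<le> c * (?q - s) powr (1-\<alpha>)"
      unfolding T'e c_def using pw_bound[OF al _ _ qr, of ?p s] by auto
  qed
  also have "\<dots> = c * (\<tau> powr (1 - \<alpha> + 1) / (1 - \<alpha> + 1))"
    using int_pow_end[of ?p ?q "1-\<alpha>"] pq al qp by simp
  also have "\<tau> powr (1 - \<alpha> + 1) = \<tau>^2 * A"
  proof -
    have "\<tau> powr (1 - \<alpha> + 1) = \<tau> powr (2 + (-\<alpha>))" by (simp add: algebra_simps)
    also have "\<dots> = \<tau> powr 2 * \<tau> powr (-\<alpha>)" by (rule powr_add)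
    finally show ?thesis unfolding A_def using tt by simp
  qed
  finally have I: "I \<le> \<alpha> / ((1 - \<alpha>/2) * Gamma (1-\<alpha>)) * (\<tau>^2 * A) / (2 - \<alpha>)"
    unfolding c_def by (simp add: algebra_simps)
  define E where "E = (1 - \<alpha>/2) powr (-\<alpha>)"
  have E1: "E \<ge> 1"
  proof -
    have "1 powr (-\<alpha>) \<le> (1 - \<alpha>/2) powr (-\<alpha>)" using al by (intro powr_mono2') auto
    then show ?thesis unfolding E_def by simp
  qed
  have We: "Wf \<alpha> ?T ?p = E * A / Gamma (1-\<alpha>)"
  proof -
    have "?T - ?p = (1 - \<alpha>/2) * \<tau>" using Tn_props(3)[of t k \<alpha>] pq al unfolding \<tau>_def by simp
    then have "Wf \<alpha> ?T ?p = ((1 - \<alpha>/2) * \<tau>) powr (-\<alpha>) / Gamma (1-\<alpha>)" unfolding Wf_def by simp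
    also have "\<dots> = E * A / Gamma (1-\<alpha>)" unfolding E_def A_def by (simp add: powr_mult)
    finally show ?thesis .
  qed
  have A0: "A \<ge> 0" unfolding A_def by simp
  show ?thesis unfolding Qr We
    by (rule final_arith[OF al tt A0 Gam_pos[OF al(2)] E1 I])
qed



lemma Lb_diff:
  assumes l: "2 \<le> l" and inc: "\<forall>k\<in>{1..l}. t (k-1) < t k"
    and c1: "continuous_on {t (l-3)..t (l-1)} g1" and c2: "continuous_on {t (l-3)..t (l-1)} g2"
  shows "Lb t (\<lambda>s. g1 s - g2 s) l = Lb t g1 l - Lb t g2 l"
proof -
  have m1: "t (l-3) \<le> t (l-2)" "t (l-2) \<le> t (l-1)" using t_mono[OF inc] by auto
  have s1: "{t (l-2)..t (l-1)} \<subseteq> {t (l-3)..t (l-1)}" "{t (l-3)..t (l-2)} \<subseteq> {t (l-3)..t (l-1)}" using m1 by auto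
  have "XI (\<lambda>s. g1 s - g2 s) (t (l-2)) (t (l-1)) = XI g1 (t (l-2)) (t (l-1)) - XI g2 (t (l-2)) (t (l-1))"
    using continuous_on_subset[OF c1 s1(1)] continuous_on_subset[OF c2 s1(1)] by (rule XI_diff)
  moreover have "ZI (\<lambda>s. g1 s - g2 s) (t (l-2)) (t (l-1)) = ZI g1 (t (l-2)) (t (l-1)) - ZI g2 (t (l-2)) (t (l-1))"
    using continuous_on_subset[OF c1 s1(1)] continuous_on_subset[OF c2 s1(1)] by (rule ZI_diff)
  moreover have "ZI (\<lambda>s. g1 s - g2 s) (t (l-3)) (t (l-2)) = ZI g1 (t (l-3)) (t (l-2)) - ZI g2 (t (l-3)) (t (l-2))"
    using continuous_on_subset[OF c1 s1(2)] continuous_on_subset[OF c2 s1(2)] by (rule ZI_diff)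
  ultimately show ?thesis unfolding Lb_def by (simp add: diff_divide_distrib)
qed

lemma Qf_diff:
  assumes c1: "continuous_on {t (l-1)..t l} g1" and c2: "continuous_on {t (l-1)..t l} g2"
  shows "Qf t (\<lambda>s. g1 s - g2 s) l = Qf t g1 l - Qf t g2 l"
  unfolding Qf_def using YI_diff[OF c1 c2] ZI_diff[OF c1 c2] by (simp add: diff_divide_distrib)

lemma rat_tau:
  assumes inc: "\<forall>k\<in>{1..N}. t (k-1) < t k" and rat: "\<forall>k\<in>{2..N}. 4/7 \<le> ratio t k"
    and l: "3 \<le> l" "l \<le> N"
  shows "tau t (l-1) \<ge> 4/7 * tau t (l-2)"
proof -
  have "l-1 \<in> {2..N}" using l by auto
  then have r: "4/7 \<le> tau t (l-1) / tau t (l-1-1)" using bspec[OF rat, of "l-1"] unfolding ratio_def by auto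
  have "tau t (l-1-1) > 0" using tau_pos[OF inc, of "l-1-1"] l by auto
  then show ?thesis using r by (simp add: pos_le_divide_eq numeral_3_eq_3 numeral_2_eq_2 diff_diff_add)
qed

lemma inc_sub:
  fixes n N :: nat and t :: "nat \<Rightarrow> real"
  shows "\<forall>k\<in>{1..N}. t (k-1) < t k \<Longrightarrow> n \<le> N \<Longrightarrow> \<forall>k\<in>{1..n}. t (k-1) < t k"
proof
  fix k assume a: "\<forall>k\<in>{1..N}. t (k-1) < t k" "n \<le> N" and k: "k \<in> {1..n}"
  then have "k \<in> {1..N}" by auto
  then show "t (k-1) < t k" using a(1) by blast
qed

lemma P1:
  assumes inc: "\<forall>k\<in>{1..N}. t (k-1) < t k" and rat: "\<forall>k\<in>{2..N}. 4/7 \<le> ratio t k"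
    and al: "0 < \<alpha>" "\<alpha> < 1" and ln: "1 \<le> l" "l \<le> n" "n \<le> N"
  shows "0 \<le> dK \<alpha> t n l"
proof -
  let ?T = "t_shift (\<alpha>/2) t n" let ?G = "Gf \<alpha> ?T"
  have incn: "\<forall>k\<in>{1..n}. t (k-1) < t k" using inc_sub[OF inc ln(3)] .
  have hT: "t (n-1) < ?T" using Tn_props(1)[of t n \<alpha>] incn ln al by auto
  have Lbok: "Lb t ?G j \<ge> 0" if j: "2 \<le> j" "j \<le> n" for j
  proof (rule Lb_nonneg[OF j(1)])
    show "\<forall>k\<in>{1..j}. t (k-1) < t k" using incn j by auto
    have "j - 1 \<le> n - 1" using j by simp
    then have jT: "t (j-1) < ?T" using t_mono[OF incn, of "j-1" "n-1"] j hT by auto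
    show "continuous_on {t (j-3)..t (j-1)} ?G" using contG[OF jT] .
    show "\<And>s. s \<in> {t (j-3)..t (j-1)} \<Longrightarrow> ?G s \<ge> 0" using al by (intro G_nonneg) auto
    show "\<And>x y. x \<in> {t (j-3)..t (j-1)} \<Longrightarrow> y \<in> {t (j-3)..t (j-1)} \<Longrightarrow> x \<le> y \<Longrightarrow> ?G x \<le> ?G y"
      using al jT by (intro G_mono) auto
    show "3 \<le> j \<Longrightarrow> tau t (j-1) \<ge> 4/7 * tau t (j-2)" using rat_tau[OF inc rat] j ln by auto
  qed
  show ?thesis
  proof (cases "l + 1 \<le> n")
    case True
    have lT: "t l < ?T" using tk_lt_Tn[OF incn True al] .
    have "Qf t ?G l \<ge> 0"
    proof (rule Qf_nonneg)
      show "t (l-1) < t l" using incn ln True by auto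
      show "t l < t (l+1)" using bspec[OF incn, of "l+1"] True by auto
      show "continuous_on {t (l-1)..t l} ?G" using contG[OF lT] .
      show "\<And>s. s \<in> {t (l-1)..t l} \<Longrightarrow> ?G s \<ge> 0" using al by (intro G_nonneg) auto
    qed
    moreover have "(if l = 1 then Wf \<alpha> ?T (t 0) else Lb t ?G l) \<ge> 0"
      using W_nonneg[OF al(2)] Lbok[of l] ln True by auto
    ultimately show ?thesis unfolding d_mid[OF incn ln(1) True al] by simp
  next
    case False
    then have ln': "l = n" using ln by simp
    have n1: "1 \<le> n" using ln by simp
    have tn: "t (n-1) < t n" using bspec[OF incn, of n] n1 by auto
    have "aL2 \<alpha> t n n - Wf \<alpha> ?T (t (n-1)) \<ge> 0"
      unfolding a_last[OF n1 tn al] using W_nonneg[OF al(2)] al by auto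
    moreover have "(if n = 1 then Wf \<alpha> ?T (t 0) else Lb t ?G n) \<ge> 0"
      using W_nonneg[OF al(2)] Lbok[of n] n1 by auto
    ultimately show ?thesis unfolding ln' d_last[OF incn n1 al] by simp
  qed
qed



lemma P2:
  assumes inc: "\<forall>k\<in>{1..N}. t (k-1) < t k" and rat: "\<forall>k\<in>{2..N}. 4/7 \<le> ratio t k"
    and al: "0 < \<alpha>" "\<alpha> < 1" and lk: "1 \<le> l" "l \<le> k" "k + 1 \<le> N"
  shows "dK \<alpha> t (k+1) l \<le> dK \<alpha> t k l"
proof -
  let ?T1 = "t_shift (\<alpha>/2) t k" let ?T2 = "t_shift (\<alpha>/2) t (k+1)"
  let ?G1 = "Gf \<alpha> ?T1" let ?G2 = "Gf \<alpha> ?T2"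
  let ?D = "\<lambda>s. ?G1 s - ?G2 s"
  have k1: "1 \<le> k" using lk by simp
  have inck: "\<forall>k'\<in>{1..k}. t (k'-1) < t k'" using inc_sub[OF inc, of k] lk by simp
  have inck1: "\<forall>k'\<in>{1..k+1}. t (k'-1) < t k'" using inc_sub[OF inc, of "k+1"] lk by simp
  have tk: "t (k-1) < t k" using bspec[OF inck, of k] k1 by auto
  have tk1: "t k < t (k+1)" using bspec[OF inck1, of "k+1"] by auto
  have hT1: "t (k-1) < ?T1" "?T1 \<le> t k" using Tn_props(1,2)[OF tk al] by auto
  have hT2: "t k < ?T2" using Tn_props(1)[of t "k+1" \<alpha>] tk1 al by simp
  have T12: "?T1 < ?T2" using hT1 hT2 by simp
  have Lbok: "Lb t ?G1 j - Lb t ?G2 j \<ge> 0" if j: "2 \<le> j" "j \<le> k" for j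
  proof -
    have incj: "\<forall>k'\<in>{1..j}. t (k'-1) < t k'" using inc_sub[OF inc, of j] j lk by simp
    have "j - 1 \<le> k - 1" using j by simp
    then have jT: "t (j-1) < ?T1" using t_mono[OF inck, of "j-1" "k-1"] j hT1 by auto
    have jT2: "t (j-1) < ?T2" using jT T12 by simp
    have c1: "continuous_on {t (j-3)..t (j-1)} ?G1" using contG[OF jT] .
    have c2: "continuous_on {t (j-3)..t (j-1)} ?G2" using contG[OF jT2] .
    have "Lb t ?D j \<ge> 0"
    proof (rule Lb_nonneg[OF j(1) incj])
      show "continuous_on {t (j-3)..t (j-1)} ?D" using c1 c2 by (intro continuous_intros)
      show "\<And>s. s \<in> {t (j-3)..t (j-1)} \<Longrightarrow> ?D s \<ge> 0"
        using al jT T12 G_diff_nonneg[of \<alpha> _ ?T1 ?T2] by fastforce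
      show "\<And>x y. x \<in> {t (j-3)..t (j-1)} \<Longrightarrow> y \<in> {t (j-3)..t (j-1)} \<Longrightarrow> x \<le> y \<Longrightarrow> ?D x \<le> ?D y"
        using al jT T12 by (intro G_diff_mono) auto
      show "3 \<le> j \<Longrightarrow> tau t (j-1) \<ge> 4/7 * tau t (j-2)" using rat_tau[OF inc rat] j lk by auto
    qed
    then show ?thesis using Lb_diff[OF j(1) incj c1 c2] by simp
  qed
  have Wok: "Wf \<alpha> ?T1 (t 0) - Wf \<alpha> ?T2 (t 0) \<ge> 0"
  proof -
    have "t 0 \<le> t (k-1)" using t_mono[OF inck, of 0 "k-1"] by auto
    then show ?thesis using W_T_mono[of \<alpha> "t 0" ?T1 ?T2] al hT1 T12 by auto
  qed
  show ?thesis
  proof (cases "l + 1 \<le> k")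
    case True
    have l1: "l + 1 \<le> k + 1" using True by simp
    have lT: "t l < ?T1" using tk_lt_Tn[OF inck True al] .
    have lT2: "t l < ?T2" using lT T12 by simp
    have c1: "continuous_on {t (l-1)..t l} ?G1" using contG[OF lT] .
    have c2: "continuous_on {t (l-1)..t l} ?G2" using contG[OF lT2] .
    have "Qf t ?D l \<ge> 0"
    proof (rule Qf_nonneg)
      show "t (l-1) < t l" using bspec[OF inck, of l] lk by auto
      show "t l < t (l+1)" using bspec[OF inck, of "l+1"] True by auto
      show "continuous_on {t (l-1)..t l} ?D" using c1 c2 by (intro continuous_intros)
      show "\<And>s. s \<in> {t (l-1)..t l} \<Longrightarrow> ?D s \<ge> 0"
        using al lT T12 G_diff_nonneg[of \<alpha> _ ?T1 ?T2] by fastforce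
    qed
    then have Q: "Qf t ?G1 l - Qf t ?G2 l \<ge> 0" using Qf_diff[OF c1 c2] by simp
    have "(if l = 1 then Wf \<alpha> ?T1 (t 0) else Lb t ?G1 l) - (if l = 1 then Wf \<alpha> ?T2 (t 0) else Lb t ?G2 l) \<ge> 0"
      using Wok Lbok[of l] lk True by auto
    then show ?thesis
      unfolding d_mid[OF inck lk(1) True al] d_mid[OF inck1 lk(1) l1 al] using Q by simp
  next
    case False
    then have lk': "l = k" using lk by simp
    have kk: "k + 1 \<le> k + 1" by simp
    have A: "aL2 \<alpha> t k k - Wf \<alpha> ?T1 (t (k-1)) \<ge> Qf t ?G2 k"
      unfolding a_last[OF k1 tk al] using Q_est[OF inc k1 lk(3) al] .
    have "(if k = 1 then Wf \<alpha> ?T1 (t 0) else Lb t ?G1 k) - (if k = 1 then Wf \<alpha> ?T2 (t 0) else Lb t ?G2 k) \<ge> 0"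
      using Wok Lbok[of k] k1 by auto
    then show ?thesis
      unfolding lk' d_last[OF inck k1 al] d_mid[OF inck1 k1 kk al] using A by simp
  qed
qed



lemma tele:
  fixes c :: "nat \<Rightarrow> real"
  shows "1 \<le> m \<Longrightarrow> (\<Sum>l=1..m. c l - (if l = 1 then 0 else c (l-1))) = c m"
proof (induction m)
  case 0 then show ?case by simp
next
  case (Suc m)
  show ?case
  proof (cases "m = 0")
    case True then show ?thesis by simp
  next
    case False
    then have "(\<Sum>l=1..Suc m. c l - (if l = 1 then 0 else c (l-1)))
       = (\<Sum>l=1..m. c l - (if l = 1 then 0 else c (l-1))) + (c (Suc m) - c m)"
      by (simp add: sum.cl_ivl_Suc)
    also have "\<dots> = c (Suc m)" using Suc False by simp
    finally show ?thesis .
  qed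
qed

lemma abel:
  fixes c w :: "nat \<Rightarrow> real"
  shows "(\<Sum>l=1..m. (c l - (if l = 1 then 0 else c (l-1))) * (\<Sum>j=l..m. w j)) = (\<Sum>j=1..m. c j * w j)"
proof (induction m)
  case 0 then show ?case by simp
next
  case (Suc m)
  let ?d = "\<lambda>l. c l - (if l = 1 then 0 else c (l-1))"
  have "(\<Sum>l=1..Suc m. ?d l * (\<Sum>j=l..Suc m. w j)) = (\<Sum>l=1..Suc m. ?d l * (\<Sum>j=l..m. w j) + ?d l * w (Suc m))"
    by (intro sum.cong refl) (auto simp: sum.cl_ivl_Suc algebra_simps)
  also have "\<dots> = (\<Sum>l=1..Suc m. ?d l * (\<Sum>j=l..m. w j)) + (\<Sum>l=1..Suc m. ?d l) * w (Suc m)"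
    by (simp only: sum.distrib sum_distrib_right)
  also have "(\<Sum>l=1..Suc m. ?d l * (\<Sum>j=l..m. w j)) = (\<Sum>l=1..m. ?d l * (\<Sum>j=l..m. w j))"
    by (simp add: sum.cl_ivl_Suc)
  also have "(\<Sum>l=1..Suc m. ?d l) = c (Suc m)" by (rule tele) simp
  finally show ?case using Suc by (simp add: sum.cl_ivl_Suc)
qed

lemma lin_sum:
  fixes f g :: "nat \<Rightarrow> real"
  shows "(\<Sum>l\<in>A. a * f l - b * g l) = a * sum f A - b * sum g A"
  by (simp add: sum_subtractf sum_distrib_left)

lemma psd_step:
  fixes c :: "nat \<Rightarrow> real" and w :: "nat \<Rightarrow> real"
  shows "2 * w (Suc m) * (\<Sum>j=1..Suc m. c j * w j)
     = (\<Sum>l=1..Suc m. (c l - (if l = 1 then 0 else c (l-1))) * ((\<Sum>j=l..Suc m. w j)^2 - (\<Sum>j=l..m. w j)^2))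
       + c (Suc m) * (w (Suc m))^2"
proof -
  let ?d = "\<lambda>l. c l - (if l = 1 then 0 else c (l-1))"
  let ?S = "\<lambda>l. \<Sum>j=l..Suc m. w j"
  have "(\<Sum>l=1..Suc m. ?d l * ((?S l)^2 - (\<Sum>j=l..m. w j)^2))
      = (\<Sum>l=1..Suc m. 2 * w (Suc m) * (?d l * ?S l) - (w (Suc m))^2 * ?d l)"
  proof (intro sum.cong refl)
    fix l assume l: "l \<in> {1..Suc m}"
    then have "?S l = (\<Sum>j=l..m. w j) + w (Suc m)" by (simp add: sum.cl_ivl_Suc)
    then show "?d l * ((?S l)^2 - (\<Sum>j=l..m. w j)^2) = 2 * w (Suc m) * (?d l * ?S l) - (w (Suc m))^2 * ?d l"
      by (simp add: power2_eq_square algebra_simps)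
  qed
  also have "\<dots> = 2 * w (Suc m) * (\<Sum>l=1..Suc m. ?d l * ?S l) - (w (Suc m))^2 * (\<Sum>l=1..Suc m. ?d l)"
    by (rule lin_sum)
  also have "(\<Sum>l=1..Suc m. ?d l * ?S l) = (\<Sum>j=1..Suc m. c j * w j)" by (rule abel)
  also have "(\<Sum>l=1..Suc m. ?d l) = c (Suc m)" by (rule tele) simp
  finally show ?thesis by simp
qed

lemma psd:
  fixes c :: "nat \<Rightarrow> nat \<Rightarrow> real" and w :: "nat \<Rightarrow> real"
  assumes P1: "\<And>n l. 1 \<le> l \<Longrightarrow> l \<le> n \<Longrightarrow> n \<le> K \<Longrightarrow> 0 \<le> c n l - (if l = 1 then 0 else c n (l-1))"
    and P2: "\<And>k l. 1 \<le> l \<Longrightarrow> l \<le> k \<Longrightarrow> k + 1 \<le> K \<Longrightarrow>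
        c (k+1) l - (if l = 1 then 0 else c (k+1) (l-1)) \<le> c k l - (if l = 1 then 0 else c k (l-1))"
  shows "0 \<le> (\<Sum>n=1..K. w n * (\<Sum>j=1..n. c n j * w j))"
proof -
  let ?d = "\<lambda>n l. c n l - (if l = 1 then 0 else c n (l-1))"
  let ?Phi = "\<lambda>m. 2 * (\<Sum>n=1..m. w n * (\<Sum>j=1..n. c n j * w j)) - (\<Sum>l=1..m. ?d m l * (\<Sum>j=l..m. w j)^2)"
  have main: "m \<le> K \<Longrightarrow> 0 \<le> ?Phi m" for m
  proof (induction m)
    case 0 then show ?case by simp
  next
    case (Suc m)
    have IH: "0 \<le> ?Phi m" using Suc by simp
    have cpos: "0 \<le> c (Suc m) (Suc m)"
    proof -
      have "c (Suc m) (Suc m) = (\<Sum>l=1..Suc m. ?d (Suc m) l)" by (rule tele[symmetric]) simp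
      also have "\<dots> \<ge> 0" using P1 Suc.prems by (intro sum_nonneg) auto
      finally show ?thesis .
    qed
    have P2': "?d (Suc m) l \<le> ?d m l" if "1 \<le> l" "l \<le> m" for l
      using P2[of l m] Suc.prems that unfolding Suc_eq_plus1 by simp
    have st: "2 * (w (Suc m) * (\<Sum>j=1..Suc m. c (Suc m) j * w j))
       = (\<Sum>l=1..Suc m. ?d (Suc m) l * ((\<Sum>j=l..Suc m. w j)^2 - (\<Sum>j=l..m. w j)^2))
         + c (Suc m) (Suc m) * (w (Suc m))^2"
      using psd_step[of w m "c (Suc m)"] by (simp add: mult.assoc)
    have "?Phi (Suc m) = ?Phi m + c (Suc m) (Suc m) * (w (Suc m))^2
        + ((\<Sum>l=1..m. ?d m l * (\<Sum>j=l..m. w j)^2) - (\<Sum>l=1..Suc m. ?d (Suc m) l * (\<Sum>j=l..m. w j)^2))"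
    proof -
      have "(\<Sum>l=1..Suc m. ?d (Suc m) l * ((\<Sum>j=l..Suc m. w j)^2 - (\<Sum>j=l..m. w j)^2))
          = (\<Sum>l=1..Suc m. ?d (Suc m) l * (\<Sum>j=l..Suc m. w j)^2) - (\<Sum>l=1..Suc m. ?d (Suc m) l * (\<Sum>j=l..m. w j)^2)"
        by (simp add: sum_subtractf right_diff_distrib)
      then show ?thesis using st by (simp add: sum.cl_ivl_Suc[of _ 1 m] algebra_simps)
    qed
    moreover have "(\<Sum>l=1..Suc m. ?d (Suc m) l * (\<Sum>j=l..m. w j)^2) = (\<Sum>l=1..m. ?d (Suc m) l * (\<Sum>j=l..m. w j)^2)"
      by (simp add: sum.cl_ivl_Suc)
    moreover have "(\<Sum>l=1..m. ?d (Suc m) l * (\<Sum>j=l..m. w j)^2) \<le> (\<Sum>l=1..m. ?d m l * (\<Sum>j=l..m. w j)^2)"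
      using P2' by (intro sum_mono mult_right_mono) auto
    moreover have "0 \<le> c (Suc m) (Suc m) * (w (Suc m))^2" using cpos by simp
    ultimately show ?case using IH by linarith
  qed
  have "0 \<le> ?Phi K" using main by simp
  moreover have "0 \<le> (\<Sum>l=1..K. ?d K l * (\<Sum>j=l..K. w j)^2)"
    using P1 by (intro sum_nonneg mult_nonneg_nonneg) auto
  ultimately show ?thesis by linarith
qed



definition gsum :: "nat \<Rightarrow> (int \<Rightarrow> int \<Rightarrow> real) \<Rightarrow> real" where
  "gsum M F = (\<Sum>i\<in>{1..int M}. \<Sum>j\<in>{1..int M}. F i j)"

lemma tele_int:
  fixes F :: "int \<Rightarrow> real"
  shows "(\<Sum>i\<in>{1..int m}. F (i+1) - F i) = F (int m + 1) - F 1"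
proof (induction m)
  case 0 then show ?case by simp
next
  case (Suc m)
  have "{1..int (Suc m)} = insert (int m + 1) {1..int m}" by auto
  then show ?case using Suc by simp
qed

lemma shift_int:
  fixes F :: "int \<Rightarrow> real"
  assumes "F (int M + 1) = F 1"
  shows "(\<Sum>i\<in>{1..int M}. F (i+1)) = (\<Sum>i\<in>{1..int M}. F i)"
  using tele_int[of F M] assms by (simp add: sum_subtractf)

lemma gsum_shift_i:
  assumes "\<And>j. F (int M + 1) j = F 1 j"
  shows "gsum M (\<lambda>i j. F (i+1) j) = gsum M F"
  unfolding gsum_def
  by (rule shift_int[of "\<lambda>i. \<Sum>j\<in>{1..int M}. F i j"]) (simp add: assms)

lemma gsum_shift_j:
  assumes "\<And>i. F i (int M + 1) = F i 1"
  shows "gsum M (\<lambda>i j. F i (j+1)) = gsum M F"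
  unfolding gsum_def
  by (intro sum.cong refl shift_int) (simp add: assms)

lemma gsum_add: "gsum M (\<lambda>i j. F i j + G i j) = gsum M F + gsum M G"
  unfolding gsum_def by (simp add: sum.distrib)
lemma gsum_diff: "gsum M (\<lambda>i j. F i j - G i j) = gsum M F - gsum M G"
  unfolding gsum_def by (simp add: sum_subtractf)
lemma gsum_mult: "gsum M (\<lambda>i j. c * F i j) = c * gsum M F"
  unfolding gsum_def by (simp add: sum_distrib_left)
lemma gsum_cong: "(\<And>i j. F i j = G i j) \<Longrightarrow> gsum M F = gsum M G"
  unfolding gsum_def by simp
lemma gsum_nonneg: "(\<And>i j. F i j \<ge> 0) \<Longrightarrow> gsum M F \<ge> 0"
  unfolding gsum_def by (intro sum_nonneg) auto

lemma grid_inner_gsum: "grid_inner M h a b = h^2 * gsum M (\<lambda>i j. a i j * b i j)"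
  unfolding grid_inner_def gsum_def ..

definition Bf :: "nat \<Rightarrow> grid \<Rightarrow> grid \<Rightarrow> real" where
  "Bf M u w = gsum M (\<lambda>i j. (u (i+1) j - u i j) * (w (i+1) j - w i j) + (u i (j+1) - u i j) * (w i (j+1) - w i j))"

lemma grad_sq_Bf:
  assumes "h \<noteq> 0"
  shows "grid_grad_sq M h v = Bf M v v"
proof -
  have "grid_grad_sq M h v = h^2 * gsum M (\<lambda>i j. ((v (i+1) j - v i j) / h)^2 + ((v i (j+1) - v i j) / h)^2)"
    unfolding grid_grad_sq_def gsum_def ..
  also have "\<dots> = gsum M (\<lambda>i j. h^2 * (((v (i+1) j - v i j) / h)^2 + ((v i (j+1) - v i j) / h)^2))"
    by (simp add: gsum_mult)
  also have "\<dots> = Bf M v v" unfolding Bf_def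
    by (intro gsum_cong) (use assms in \<open>simp add: power2_eq_square field_simps\<close>)
  finally show ?thesis .
qed

lemma Bf_nonneg: "Bf M v v \<ge> 0"
  unfolding Bf_def by (intro gsum_nonneg) (simp add: add_nonneg_nonneg)

lemma lap_ibp:
  assumes pu: "periodic_grid M u" and pw: "periodic_grid M w" and h: "h \<noteq> 0"
  shows "grid_inner M h (grid_lap h u) w = - Bf M u w"
proof -
  have pu1: "u (i + int M) j = u i j" "u i (j + int M) = u i j" for i j using pu unfolding periodic_grid_def by auto
  have pw1: "w (i + int M) j = w i j" "w i (j + int M) = w i j" for i j using pw unfolding periodic_grid_def by auto
  have eu: "u (int M) j = u 0 j" "u i (int M) = u i 0" "u (int M + 1) j = u 1 j" "u i (int M + 1) = u i 1" for i j
    using pu1[of 0 j] pu1[of i 0] pu1[of 1 j] pu1[of i 1] by (simp_all add: add.commute)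
  have ew: "w (int M) j = w 0 j" "w i (int M) = w i 0" "w (int M + 1) j = w 1 j" "w i (int M + 1) = w i 1" for i j
    using pw1[of 0 j] pw1[of i 0] pw1[of 1 j] pw1[of i 1] by (simp_all add: add.commute)
  have "grid_inner M h (grid_lap h u) w = gsum M (\<lambda>i j. h^2 * (grid_lap h u i j * w i j))"
    unfolding grid_inner_gsum by (simp add: gsum_mult)
  also have "\<dots> = gsum M (\<lambda>i j. (u (i+1) j + u (i-1) j + u i (j+1) + u i (j-1) - 4 * u i j) * w i j)"
    by (intro gsum_cong) (use h in \<open>simp add: grid_lap_def\<close>)
  also have "\<dots> = - Bf M u w"
  proof -
    have "gsum M (\<lambda>i j. (u (i+1) j + u (i-1) j + u i (j+1) + u i (j-1) - 4 * u i j) * w i j) + Bf M u w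
      = gsum M (\<lambda>i j. u (i-1) j * w i j - u i j * w (i+1) j)
      + gsum M (\<lambda>i j. u i (j-1) * w i j - u i j * w i (j+1))
      + gsum M (\<lambda>i j. u (i+1) j * w (i+1) j - u i j * w i j)
      + gsum M (\<lambda>i j. u i (j+1) * w i (j+1) - u i j * w i j)"
      unfolding Bf_def gsum_add[symmetric]
      by (intro gsum_cong) (simp add: algebra_simps)
    also have "\<dots> = 0"
    proof -
      have "gsum M (\<lambda>i j. u i j * w (i+1) j) = gsum M (\<lambda>i j. u (i-1) j * w i j)"
        using gsum_shift_i[where M=M and F="\<lambda>i j. u (i-1) j * w i j"] eu ew
        by simp
      moreover have "gsum M (\<lambda>i j. u i j * w i (j+1)) = gsum M (\<lambda>i j. u i (j-1) * w i j)"
        using gsum_shift_j[where M=M and F="\<lambda>i j. u i (j-1) * w i j"] eu ew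
        by simp
      moreover have "gsum M (\<lambda>i j. u (i+1) j * w (i+1) j) = gsum M (\<lambda>i j. u i j * w i j)"
        using gsum_shift_i[where M=M and F="\<lambda>i j. u i j * w i j"] eu ew
        by simp
      moreover have "gsum M (\<lambda>i j. u i (j+1) * w i (j+1)) = gsum M (\<lambda>i j. u i j * w i j)"
        using gsum_shift_j[where M=M and F="\<lambda>i j. u i j * w i j"] eu ew
        by simp
      ultimately show ?thesis unfolding gsum_diff by simp
    qed
    finally show ?thesis by linarith
  qed
  finally show ?thesis by simp
qed

lemma Bf_mix:
  "Bf M (gmix \<sigma> a b) (\<lambda>i j. a i j - b i j)
     = (Bf M a a - Bf M b b) / 2 + (1/2 - \<sigma>) * Bf M (\<lambda>i j. a i j - b i j) (\<lambda>i j. a i j - b i j)"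
proof -
  have "Bf M (gmix \<sigma> a b) (\<lambda>i j. a i j - b i j)
     = gsum M (\<lambda>i j. (1/2) * ((a (i+1) j - a i j) * (a (i+1) j - a i j) + (a i (j+1) - a i j) * (a i (j+1) - a i j))
          - (1/2) * ((b (i+1) j - b i j) * (b (i+1) j - b i j) + (b i (j+1) - b i j) * (b i (j+1) - b i j))
          + (1/2 - \<sigma>) * ((a (i+1) j - b (i+1) j - (a i j - b i j)) * (a (i+1) j - b (i+1) j - (a i j - b i j))
              + (a i (j+1) - b i (j+1) - (a i j - b i j)) * (a i (j+1) - b i (j+1) - (a i j - b i j))))"
    unfolding Bf_def gmix_def by (intro gsum_cong) (simp add: algebra_simps)
  then show ?thesis unfolding Bf_def gsum_add gsum_diff gsum_mult by (simp add: field_simps)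
qed



lemma periodic_mix: "periodic_grid M a \<Longrightarrow> periodic_grid M b \<Longrightarrow> periodic_grid M (gmix \<sigma> a b)"
  unfolding periodic_grid_def gmix_def by simp
lemma periodic_diff: "periodic_grid M a \<Longrightarrow> periodic_grid M b \<Longrightarrow> periodic_grid M (\<lambda>i j. a i j - b i j)"
  unfolding periodic_grid_def by simp

lemma gsum_sum: "(\<Sum>n\<in>A. gsum M (F n)) = gsum M (\<lambda>i j. \<Sum>n\<in>A. F n i j)"
proof -
  have "(\<Sum>n\<in>A. \<Sum>i\<in>{1..int M}. \<Sum>j\<in>{1..int M}. F n i j) = (\<Sum>i\<in>{1..int M}. \<Sum>n\<in>A. \<Sum>j\<in>{1..int M}. F n i j)"
    by (rule sum.swap)
  also have "\<dots> = (\<Sum>i\<in>{1..int M}. \<Sum>j\<in>{1..int M}. \<Sum>n\<in>A. F n i j)"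
    by (intro sum.cong refl sum.swap)
  finally show ?thesis unfolding gsum_def .
qed

lemma kernel_psd:
  assumes inc: "\<forall>k\<in>{1..N}. t (k-1) < t k" and rat: "\<forall>k\<in>{2..N}. 4/7 \<le> ratio t k"
    and al: "0 < \<alpha>" "\<alpha> < 1" and K: "K \<le> N"
  shows "0 \<le> (\<Sum>n=1..K. w n * (\<Sum>j=1..n. BL2 \<alpha> t n j * w j))"
proof (rule psd)
  fix n l assume "1 \<le> l" "l \<le> n" "n \<le> K"
  then show "0 \<le> BL2 \<alpha> t n l - (if l = 1 then 0 else BL2 \<alpha> t n (l-1))"
    using P1[OF inc rat al, of l n] K unfolding dK_def by simp
next
  fix k l assume "1 \<le> l" "l \<le> k" "k + 1 \<le> K"
  then show "BL2 \<alpha> t (k+1) l - (if l = 1 then 0 else BL2 \<alpha> t (k+1) (l-1)) \<le> BL2 \<alpha> t k l - (if l = 1 then 0 else BL2 \<alpha> t k (l-1))"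
    using P2[OF inc rat al, of l k] K unfolding dK_def by simp
qed



lemma final_alg:
  fixes m e2 Lw V h2 P Q \<kappa> X Rd A Bb s B Ed :: real
  assumes m: "m > 0" and a: "h2*X = m*(e2*Lw + V*(h2*P) - \<kappa>*V*(h2*Q))"
    and b: "Rd = V*(h2*(-P + \<kappa>*Q))" and c: "Lw = -((A - Bb)/2 + s*B)"
    and nn: "e2*(s*B) \<ge> 0" and e: "Ed = e2/2*(A-Bb) + Rd"
  shows "Ed \<le> -(1/m)*(h2*X)"
proof -
  have x: "(1/m)*(h2*X) = e2*Lw + V*(h2*P) - \<kappa>*V*(h2*Q)" using a m by (simp add: field_simps)
  have "Ed + (1/m)*(h2*X) = -(e2*(s*B))" unfolding e b x c by (simp add: algebra_simps)
  then show ?thesis using nn by linarith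
qed

theorem mainTheorem9:
  fixes nl :: nonlin and L m \<epsilon> \<alpha> \<kappa> K1 K2 :: real and M N :: nat
    and V :: "real \<Rightarrow> real" and t :: "nat \<Rightarrow> real"
    and \<phi> \<phi>hat :: "nat \<Rightarrow> grid" and R :: "nat \<Rightarrow> real"
  defines "\<beta> \<equiv> nl_beta nl"
      and "\<sigma> \<equiv> \<alpha> / 2"
      and "h \<equiv> L / real M"
  assumes nl: "nl_valid nl"
      and L: "0 < L" and M: "1 \<le> M"
      and m: "0 < m" and eps: "0 < \<epsilon>" and alpha: "0 < \<alpha>" "\<alpha> < 1"
      \<comment> \<open>(A1)\<close>
      and A1: "\<exists>V'. (\<forall>x. (V has_real_derivative V' x) (at x)) \<and> continuous_on UNIV V'
                 \<and> (\<exists>C. \<forall>x y. \<bar>V' x - V' y\<bar> \<le> C * \<bar>x - y\<bar>)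
                 \<and> V' 1 = 0 \<and> (\<forall>x. \<bar>V' x\<bar> \<le> K1)"
      and A1b: "V 1 = 1"
      \<comment> \<open>(A2)\<close>
      and A2: "0 < K2" "\<forall>x. 0 \<le> V x \<and> V x \<le> K2"
      \<comment> \<open>(A3)\<close>
      and A3: "\<forall>z1 z2. \<bar>z1 - 1\<bar> \<le> \<bar>z2 - 1\<bar> \<longrightarrow> \<bar>V z1 - 1\<bar> \<le> \<bar>V z2 - 1\<bar>"
      \<comment> \<open>time grid\<close>
      and N: "1 \<le> N"
      and t0: "t 0 = 0" and tmono: "\<forall>k\<in>{1..N}. t (k - 1) < t k"
      and ratio: "\<forall>k\<in>{2..N}. ratio t k \<ge> 4/7"
      and kappa0: "0 \<le> \<kappa>"
      and kappa: "\<forall>x\<in>{-\<beta>..\<beta>}. \<bar>deriv (nl_f nl) x\<bar> \<le> \<kappa>"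
      and tau1: "tau t 1 \<le> min
          ((4 / (11 * \<sigma> * m * (\<kappa> + 4 * \<epsilon>^2 / h^2) * Gamma (2 - \<alpha>))) powr (1 / \<alpha>))
          ((4 / (11 * \<kappa> * (1 - \<sigma>) * m * Gamma (2 - \<alpha>))) powr (1 / \<alpha>))"
      \<comment> \<open>initial data\<close>
      and phi0: "periodic_grid M (\<phi> 0)" "\<forall>i j. \<bar>\<phi> 0 i j\<bar> \<le> \<beta>"
      \<comment> \<open>all iterates are grid functions\<close>
      and per: "\<forall>n\<in>{1..N}. periodic_grid M (\<phi> n) \<and> periodic_grid M (\<phi>hat n)"
      \<comment> \<open>first predicted solution\<close>
      and hat1: "\<forall>i j. \<bar>\<phi>hat 1 i j\<bar> \<le> \<beta>"
      and hat1eq: "\<forall>i j. BL2 \<alpha> t 1 1 * (\<phi>hat 1 i j - \<phi> 0 i j)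
             = m * (\<epsilon>^2 * grid_lap h (gmix \<sigma> (\<phi>hat 1) (\<phi> 0)) i j
                    + nl_f nl (gmix \<sigma> (\<phi>hat 1) (\<phi> 0) i j))"
      \<comment> \<open>predicted solution for n >= 2\<close>
      and hatn: "\<forall>n\<in>{2..N}. \<forall>i j. \<phi>hat n i j
             = clip \<beta> ((1 + ratio t n) * \<phi> (n - 1) i j - ratio t n * \<phi> (n - 2) i j)"
      \<comment> \<open>well-definedness of the logarithmic terms in the Flory-Huggins case\<close>
      and FHdom: "nl \<noteq> DoubleWell \<longrightarrow>
             (\<forall>n\<in>{1..N}. \<forall>i j. \<bar>gmix \<sigma> (\<phi>hat n) (\<phi> (n - 1)) i j\<bar> < 1)"
      \<comment> \<open>the scheme\<close>
      and phieq: "\<forall>n\<in>{1..N}. \<forall>i j.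
             caputo_L2 \<alpha> t \<phi> n i j
             = m * (\<epsilon>^2 * grid_lap h (gmix \<sigma> (\<phi> n) (\<phi> (n - 1))) i j
                 + V (gh nl M h (gmix \<sigma> (\<phi>hat n) (\<phi> (n - 1))) (R (n - 1)))
                     * nl_f nl (gmix \<sigma> (\<phi>hat n) (\<phi> (n - 1)) i j)
                 - \<kappa> * V (gh nl M h (gmix \<sigma> (\<phi>hat n) (\<phi> (n - 1))) (R (n - 1)))
                     * (gmix \<sigma> (\<phi> n) (\<phi> (n - 1)) i j - gmix \<sigma> (\<phi>hat n) (\<phi> (n - 1)) i j))"
      and Req: "\<forall>n\<in>{1..N}.
             (R n - R (n - 1)) / tau t n
             = V (gh nl M h (gmix \<sigma> (\<phi>hat n) (\<phi> (n - 1))) (R (n - 1)))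
               * grid_inner M h
                   (\<lambda>i j. - nl_f nl (gmix \<sigma> (\<phi>hat n) (\<phi> (n - 1)) i j)
                          + \<kappa> * (gmix \<sigma> (\<phi> n) (\<phi> (n - 1)) i j
                                  - gmix \<sigma> (\<phi>hat n) (\<phi> (n - 1)) i j))
                   (\<lambda>i j. (\<phi> n i j - \<phi> (n - 1) i j) / tau t n)"
  shows "\<forall>n\<in>{1..N}. mod_energy M h \<epsilon> (\<phi> n) (R n) \<le> mod_energy M h \<epsilon> (\<phi> 0) (R 0)"
proof -
  have sdef: "\<sigma> = \<alpha>/2" using assms(2) by simp
  have hdef: "h = L / real M" using assms(3) by simp
  have h0: "h > 0" using L M hdef by simp
  then have hne: "h \<noteq> 0" by simp
  have al: "0 < \<alpha>" "\<alpha> < 1" using alpha by auto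
  have perphi: "periodic_grid M (\<phi> n)" if "n \<le> N" for n
    using phi0(1) per that by (cases "n = 0") auto
  define w where "w = (\<lambda>n i j. \<phi> n i j - \<phi> (n-1) i j)"
  define En where "En = (\<lambda>n. mod_energy M h \<epsilon> (\<phi> n) (R n))"
  define gi where "gi = (\<lambda>n. grid_inner M h (caputo_L2 \<alpha> t \<phi> n) (w n))"
  have step: "En n - En (n-1) \<le> -(1/m) * gi n" if n: "n \<in> {1..N}" for n
  proof -
    define Vn where "Vn = V (gh nl M h (gmix \<sigma> (\<phi>hat n) (\<phi> (n - 1))) (R (n - 1)))"
    define F where "F = (\<lambda>i j. nl_f nl (gmix \<sigma> (\<phi>hat n) (\<phi> (n - 1)) i j))"
    define D where "D = (\<lambda>i j. gmix \<sigma> (\<phi> n) (\<phi> (n - 1)) i j - gmix \<sigma> (\<phi>hat n) (\<phi> (n - 1)) i j)"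
    define u where "u = gmix \<sigma> (\<phi> n) (\<phi> (n - 1))"
    define X where "X = gsum M (\<lambda>i j. caputo_L2 \<alpha> t \<phi> n i j * w n i j)"
    define P where "P = gsum M (\<lambda>i j. F i j * w n i j)"
    define Q where "Q = gsum M (\<lambda>i j. D i j * w n i j)"
    define Lw where "Lw = grid_inner M h (grid_lap h u) (w n)"
    have pa: "periodic_grid M (\<phi> n)" using perphi n by auto
    have pb: "periodic_grid M (\<phi> (n-1))" using perphi n by auto
    have giX: "gi n = h^2 * X" unfolding gi_def X_def grid_inner_gsum ..
    have pe: "caputo_L2 \<alpha> t \<phi> n i j = m * (\<epsilon>^2 * grid_lap h u i j + Vn * F i j - \<kappa> * Vn * D i j)" for i j
      using phieq n unfolding Vn_def F_def D_def u_def by blast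
    have a: "h^2 * X = m * (\<epsilon>^2 * Lw + Vn * (h^2 * P) - \<kappa> * Vn * (h^2 * Q))"
    proof -
      have "X = gsum M (\<lambda>i j. (m * \<epsilon>^2) * (grid_lap h u i j * w n i j) + (m * Vn) * (F i j * w n i j)
                 - (m * \<kappa> * Vn) * (D i j * w n i j))"
        unfolding X_def by (intro gsum_cong) (simp only: pe, simp add: algebra_simps)
      also have "\<dots> = (m * \<epsilon>^2) * gsum M (\<lambda>i j. grid_lap h u i j * w n i j) + (m * Vn) * P - (m * \<kappa> * Vn) * Q"
        unfolding gsum_add gsum_diff gsum_mult P_def Q_def ..
      finally have Xe: "X = (m * \<epsilon>^2) * gsum M (\<lambda>i j. grid_lap h u i j * w n i j) + (m * Vn) * P - (m * \<kappa> * Vn) * Q" .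
      show ?thesis unfolding Lw_def grid_inner_gsum Xe by (simp add: algebra_simps)
    qed
    have b: "R n - R (n-1) = Vn * (h^2 * (- P + \<kappa> * Q))"
    proof -
      have tp: "tau t n > 0" using tmono n unfolding tau_def by auto
      have "grid_inner M h (\<lambda>i j. - F i j + \<kappa> * D i j) (\<lambda>i j. (\<phi> n i j - \<phi> (n - 1) i j) / tau t n)
            = h^2 * gsum M (\<lambda>i j. (1 / tau t n) * (\<kappa> * (D i j * w n i j)) - (1 / tau t n) * (F i j * w n i j))"
        unfolding grid_inner_gsum w_def by (intro arg_cong[where f="\<lambda>x. h^2 * x"] gsum_cong) (use tp in \<open>simp add: field_simps\<close>)
      also have "\<dots> = h^2 * (- P + \<kappa> * Q) / tau t n"
        unfolding gsum_diff gsum_mult P_def Q_def using tp by (simp add: field_simps)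
      finally have "(R n - R (n-1)) / tau t n = Vn * (h^2 * (- P + \<kappa> * Q) / tau t n)"
        using Req n unfolding Vn_def F_def D_def by auto
      then show ?thesis using tp by (simp add: field_simps)
    qed
    have c: "Lw = -((Bf M (\<phi> n) (\<phi> n) - Bf M (\<phi> (n-1)) (\<phi> (n-1)))/2 + (1/2 - \<sigma>) * Bf M (w n) (w n))"
    proof -
      have pu: "periodic_grid M u" unfolding u_def by (rule periodic_mix[OF pa pb])
      have pw: "periodic_grid M (w n)" unfolding w_def by (rule periodic_diff[OF pa pb])
      have "Lw = - Bf M u (w n)" unfolding Lw_def by (rule lap_ibp[OF pu pw hne])
      also have "Bf M u (w n) = (Bf M (\<phi> n) (\<phi> n) - Bf M (\<phi> (n-1)) (\<phi> (n-1)))/2 + (1/2 - \<sigma>) * Bf M (w n) (w n)"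
        unfolding u_def w_def by (rule Bf_mix)
      finally show ?thesis .
    qed
    have e: "En n - En (n-1) = \<epsilon>^2/2 * (Bf M (\<phi> n) (\<phi> n) - Bf M (\<phi> (n-1)) (\<phi> (n-1))) + (R n - R (n-1))"
      unfolding En_def mod_energy_def grad_sq_Bf[OF hne] by (simp add: algebra_simps)
    have nn: "\<epsilon>^2 * ((1/2 - \<sigma>) * Bf M (w n) (w n)) \<ge> 0"
      using Bf_nonneg[of M "w n"] al sdef by (intro mult_nonneg_nonneg) auto
    show ?thesis unfolding giX
      by (rule final_alg[OF m a b c nn e])
  qed
  have tele: "En K \<le> En 0 - (1/m) * (\<Sum>n=1..K. gi n)" if "K \<le> N" for K
    using that
  proof (induction K)
    case 0 then show ?case by simp
  next
    case (Suc K)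
    have "En (Suc K) - En K \<le> -(1/m) * gi (Suc K)" using step[of "Suc K"] Suc.prems by simp
    then show ?case using Suc by (simp add: sum.cl_ivl_Suc algebra_simps)
  qed
  have gisum: "0 \<le> (\<Sum>n=1..K. gi n)" if "K \<le> N" for K
  proof -
    have "(\<Sum>n=1..K. gi n) = h^2 * gsum M (\<lambda>i j. \<Sum>n=1..K. w n i j * (\<Sum>k=1..n. BL2 \<alpha> t n k * w k i j))"
      unfolding gi_def grid_inner_gsum sum_distrib_left[symmetric] gsum_sum
      by (intro arg_cong[where f="\<lambda>x. h^2 * x"] gsum_cong sum.cong refl) (simp add: caputo_L2_def w_def mult.commute)
    also have "\<dots> \<ge> 0"
      using kernel_psd[OF tmono ratio al that] by (intro mult_nonneg_nonneg gsum_nonneg) auto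
    finally show ?thesis .
  qed
  show ?thesis
  proof
    fix n assume n: "n \<in> {1..N}"
    have "En n \<le> En 0 - (1/m) * (\<Sum>k=1..n. gi k)" using tele n by simp
    also have "\<dots> \<le> En 0" using gisum[of n] n m by simp
    finally show "mod_energy M h \<epsilon> (\<phi> n) (R n) \<le> mod_energy M h \<epsilon> (\<phi> 0) (R 0)" unfolding En_def .
  qed
qed


end
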